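(* Let $k\ge1$ and consider the following linear maps $\mathcal{D}^k_{0,1}(S^1)\to\mathcal{D}^k_{0,1}(S^1)$, written for $A=\sum_{i=0}^k a_i(x)\frac{d^i}{dx^i}$ in a local coordinate $x$ (with $d=\frac{d}{dx}\in\mathcal{D}^1_{0,1}(S^1)$ the de Rham differential and functions understood as zeroth order operators): $C(A)=\sum_{i=0}^k(-1)^i\big(\frac{d}{dx}\big)^i\circ a_i(x)$; $P_0(A)=a_0(x)$; $P_0^*(A)=\sum_{i=0}^k(-1)^i a_i^{(i)}(x)$; $P_1(A)=\big(\sum_{i=1}^k(-1)^{i-1}a_i^{(i-1)}(x)\big)\circ d$; $L(A)=\big(\int_{S^1}a_0(x)\,dx\big)\, d$. Then these maps belong to $\mathcal{I}^k_{0,1}(S^1)$ and satisfy the following relations (products are compositions): $P_0P_0=P_0$, $P_0C=P_0^*$, $P_0P_0^*=P_0^*$, $P_0P_1=0$, $P_0L=0$; $CP_0=P_0$, $C^2=\mathrm{Id}$, $CP_0^*=P_0^*$, $CP_1=P_0^*-P_1-P_0$, $CL=-L$; $P_0^*P_0=P_0$, $P_0^*C=P_0$, $P_0^*P_0^*=P_0^*$, $P_0^*P_1=P_0^*-P_0$, $P_0^*L=0$; $P_1P_0=0$, $P_1C=-P_1$, $P_1P_0^*=0$, $P_1P_1=P_1$, $P_1L=L$; $LP_0=L$, $LC=L$, $LP_0^*=L$, $LP_1=0$, $LL=0$.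
   Context: $\mathcal{F}_\lambda$ denotes the space of smooth $\lambda$-densities $\phi(x)(dx)^\lambda$ on $S^1$ with $\mathrm{Diff}(S^1)$-action $\rho^\lambda_{f^{-1}}:\phi(x)(dx)^\lambda\mapsto (f'(x))^\lambda\phi(f(x))(dx)^\lambda$; in particular $\mathcal{F}_0$ is functions and $\mathcal{F}_1$ is 1-forms. $\mathcal{D}^k_{0,1}(S^1)$ is the space of linear differential operators $A=\sum_{i=0}^k a_i(x)\frac{d^i}{dx^i}:\mathcal{F}_0\to\mathcal{F}_1$ of order $\le k$, with $\mathrm{Diff}(S^1)$-action $A\mapsto\rho^1_f\circ A\circ\rho^0_{f^{-1}}$. $\mathcal{I}^k_{0,1}(S^1)$ is the associative algebra of linear maps $\mathcal{D}^k_{0,1}(S^1)\to\mathcal{D}^k_{0,1}(S^1)$ commuting with this action. Note that $a_0(x)dx$ is a well-defined 1-form, so $\int_{S^1}a_0\,dx$ is well defined. *)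

theory Defs
  imports "HOL-Analysis.Analysis"
begin

text \<open>The circle S^1 = R/Z; functions on S^1 are 1-periodic functions on R.
  Both F_0 (functions) and F_1 (1-forms phi(x) dx) are represented by their
  coefficient function in the global coordinate x.\<close>

definition smooth :: "(real \<Rightarrow> real) \<Rightarrow> bool" where
  "smooth f \<longleftrightarrow> (\<forall>n x. ((deriv ^^ n) f) differentiable (at x))"

definition SP :: "(real \<Rightarrow> real) set" where
  "SP = {f. smooth f \<and> (\<forall>x. f (x + 1) = f x)}"

type_synonym op = "(real \<Rightarrow> real) \<Rightarrow> (real \<Rightarrow> real)"

definition mkop :: "op \<Rightarrow> op" where
  "mkop F = (\<lambda>\<phi>. if \<phi> \<in> SP then F \<phi> else (\<lambda>x. 0))"

definition is_coeffs :: "nat \<Rightarrow> op \<Rightarrow> (nat \<Rightarrow> real \<Rightarrow> real) \<Rightarrow> bool" where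
  "is_coeffs k A a \<longleftrightarrow> (\<forall>i. a i \<in> SP) \<and> (\<forall>i>k. a i = (\<lambda>x. 0)) \<and>
     (\<forall>\<phi>\<in>SP. A \<phi> = (\<lambda>x. \<Sum>i\<le>k. a i x * (deriv ^^ i) \<phi> x))"

text \<open>D^k_{0,1}(S^1): differential operators of order at most k from functions to 1-forms.\<close>
definition Dk :: "nat \<Rightarrow> op set" where
  "Dk k = {A. (\<exists>a. is_coeffs k A a) \<and> (\<forall>\<phi>. \<phi> \<notin> SP \<longrightarrow> A \<phi> = (\<lambda>x. 0))}"

definition coeffs :: "nat \<Rightarrow> op \<Rightarrow> nat \<Rightarrow> real \<Rightarrow> real" where
  "coeffs k A = (THE a. is_coeffs k A a)"

definition opadd :: "op \<Rightarrow> op \<Rightarrow> op" where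
  "opadd A B = (\<lambda>\<phi> x. A \<phi> x + B \<phi> x)"

definition opscale :: "real \<Rightarrow> op \<Rightarrow> op" where
  "opscale c A = (\<lambda>\<phi> x. c * A \<phi> x)"

text \<open>Lifts to R of orientation preserving diffeomorphisms of S^1 = R/Z.\<close>
definition Diffp :: "(real \<Rightarrow> real) set" where
  "Diffp = {f. smooth f \<and> (\<forall>x. deriv f x > 0) \<and> (\<forall>x. f (x + 1) = f x + 1)}"

text \<open>rho^lambda_{f^{-1}} : phi(x) (dx)^lambda \<mapsto> (f'(x))^lambda phi(f(x)) (dx)^lambda.\<close>
definition rho_inv :: "real \<Rightarrow> (real \<Rightarrow> real) \<Rightarrow> (real \<Rightarrow> real) \<Rightarrow> (real \<Rightarrow> real)" where
  "rho_inv lam f \<phi> = (\<lambda>x. (deriv f x) powr lam * \<phi> (f x))"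

text \<open>The action A \<mapsto> rho^1_f o A o rho^0_{f^{-1}}, where rho^1_f = rho^1_{(f^{-1})^{-1}}.\<close>
definition act :: "(real \<Rightarrow> real) \<Rightarrow> op \<Rightarrow> op" where
  "act f A = mkop (\<lambda>\<phi>. rho_inv 1 (inv f) (A (rho_inv 0 f \<phi>)))"

definition Ik :: "nat \<Rightarrow> (op \<Rightarrow> op) set" where
  "Ik k = {T. (\<forall>A\<in>Dk k. T A \<in> Dk k) \<and>
     (\<forall>A\<in>Dk k. \<forall>B\<in>Dk k. T (opadd A B) = opadd (T A) (T B)) \<and>
     (\<forall>c. \<forall>A\<in>Dk k. T (opscale c A) = opscale c (T A)) \<and>
     (\<forall>f\<in>Diffp. \<forall>A\<in>Dk k. T (act f A) = act f (T A))}"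

definition Cmap :: "nat \<Rightarrow> op \<Rightarrow> op" where
  "Cmap k A = mkop (\<lambda>\<phi> x. \<Sum>i\<le>k. (-1) ^ i * (deriv ^^ i) (\<lambda>y. coeffs k A i y * \<phi> y) x)"

definition P0 :: "nat \<Rightarrow> op \<Rightarrow> op" where
  "P0 k A = mkop (\<lambda>\<phi> x. coeffs k A 0 x * \<phi> x)"

definition P0s :: "nat \<Rightarrow> op \<Rightarrow> op" where
  "P0s k A = mkop (\<lambda>\<phi> x. (\<Sum>i\<le>k. (-1) ^ i * (deriv ^^ i) (coeffs k A i) x) * \<phi> x)"

definition P1 :: "nat \<Rightarrow> op \<Rightarrow> op" where
  "P1 k A = mkop (\<lambda>\<phi> x. (\<Sum>i\<in>{1..k}. (-1) ^ (i - 1) * (deriv ^^ (i - 1)) (coeffs k A i) x)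
                         * deriv \<phi> x)"

definition Lmap :: "nat \<Rightarrow> op \<Rightarrow> op" where
  "Lmap k A = mkop (\<lambda>\<phi> x. integral {0..1} (coeffs k A 0) * deriv \<phi> x)"

definition zero_op :: op where
  "zero_op = (\<lambda>\<phi> x. 0)"

definition opminus :: "op \<Rightarrow> op \<Rightarrow> op" where
  "opminus A B = (\<lambda>\<phi> x. A \<phi> x - B \<phi> x)"

definition opneg :: "op \<Rightarrow> op" where
  "opneg A = (\<lambda>\<phi> x. - A \<phi> x)"

end

theory Submission
  imports Defs "HOL-Computational_Algebra.Polynomial"
begin

abbreviation Dn :: "nat \<Rightarrow> (real \<Rightarrow> real) \<Rightarrow> (real \<Rightarrow> real)" where
  "Dn n \<equiv> deriv ^^ n"

fun Cn :: "nat \<Rightarrow> (real \<Rightarrow> real) \<Rightarrow> bool" where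
  "Cn 0 f = (\<forall>x. f differentiable (at x))"
| "Cn (Suc n) f = ((\<forall>x. f differentiable (at x)) \<and> Cn n (deriv f))"

lemma Dn_Suc': "Dn (Suc n) f = Dn n (deriv f)"
  by (simp add: funpow_Suc_right del: funpow.simps)

lemma rdiff_fd: "(f::real\<Rightarrow>real) differentiable (at x) \<Longrightarrow> f field_differentiable (at x)"
  by (metis DERIV_deriv_iff_real_differentiable DERIV_deriv_iff_field_differentiable)

lemma Cn_iff: "Cn n f \<longleftrightarrow> (\<forall>m\<le>n. \<forall>x. (Dn m f) differentiable (at x))"
proof (induction n arbitrary: f)
  case 0 then show ?case by simp
next
  case (Suc n)
  show ?case
  proof
    assume "Cn (Suc n) f"
    then have a: "\<forall>x. f differentiable (at x)" and b: "Cn n (deriv f)" by auto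
    show "\<forall>m\<le>Suc n. \<forall>x. Dn m f differentiable at x"
    proof (intro allI impI)
      fix m x assume "m \<le> Suc n"
      show "Dn m f differentiable at x"
      proof (cases m)
        case 0 then show ?thesis using a by simp
      next
        case (Suc m')
        then have "Dn m f = Dn m' (deriv f)" by (simp only: Dn_Suc')
        then show ?thesis using Suc.IH b \<open>m \<le> Suc n\<close> Suc by auto
      qed
    qed
  next
    assume h: "\<forall>m\<le>Suc n. \<forall>x. Dn m f differentiable at x"
    have "\<forall>m\<le>n. \<forall>x. Dn m (deriv f) differentiable at x"
    proof (intro allI impI)
      fix m x assume "m \<le> n"
      have "Dn m (deriv f) = Dn (Suc m) f" by (simp only: Dn_Suc')
      then show "Dn m (deriv f) differentiable at x" using h \<open>m \<le> n\<close> by auto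
    qed
    then show "Cn (Suc n) f" using h Suc.IH by force
  qed
qed

lemma smooth_Cn: "smooth f \<longleftrightarrow> (\<forall>n. Cn n f)"
  unfolding smooth_def Cn_iff by blast

lemma Cn_diff: "Cn n f \<Longrightarrow> f differentiable (at x)"
  by (cases n) auto

lemma Cn_Suc_mono: "Cn (Suc n) f \<Longrightarrow> Cn n f"
  by (induction n arbitrary: f) auto

lemma Cn_mono: "Cn n f \<Longrightarrow> m \<le> n \<Longrightarrow> Cn m f"
  unfolding Cn_iff by auto

lemma deriv_add_fun:
  fixes f g :: "real \<Rightarrow> real"
  assumes "\<And>x. f differentiable (at x)" "\<And>x. g differentiable (at x)"
  shows "deriv (\<lambda>x. f x + g x) = (\<lambda>x. deriv f x + deriv g x)"
  using assms by (intro ext deriv_add) (auto intro: rdiff_fd)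

lemma deriv_mult_fun:
  fixes f g :: "real \<Rightarrow> real"
  assumes "\<And>x. f differentiable (at x)" "\<And>x. g differentiable (at x)"
  shows "deriv (\<lambda>x. f x * g x) = (\<lambda>x. f x * deriv g x + deriv f x * g x)"
  using assms by (intro ext deriv_mult) (auto intro: rdiff_fd)

lemma deriv_cmult_fun:
  fixes f g :: "real \<Rightarrow> real"
  assumes "\<And>x. f differentiable (at x)"
  shows "deriv (\<lambda>x. c * f x) = (\<lambda>x. c * deriv f x)"
  using assms by (intro ext deriv_cmult) (auto intro: rdiff_fd)

lemma deriv_const_fun: "deriv (\<lambda>x. c) = (\<lambda>x::real. 0::real)"
  by (rule ext, rule DERIV_imp_deriv) (rule DERIV_const)

lemma Cn_const: "Cn n (\<lambda>x. c)"
  by (induction n arbitrary: c) (simp_all add: deriv_const_fun)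

lemma Cn_id: "Cn n (\<lambda>x. x)"
proof (cases n)
  case 0 then show ?thesis by simp
next
  case (Suc m)
  have "deriv (\<lambda>x::real. x) = (\<lambda>x. 1)" by (rule ext, rule DERIV_imp_deriv) (rule DERIV_ident)
  then show ?thesis using Suc Cn_const by simp
qed

lemma Cn_add: "Cn n f \<Longrightarrow> Cn n g \<Longrightarrow> Cn n (\<lambda>x. f x + g x)"
proof (induction n arbitrary: f g)
  case 0 then show ?case by auto
next
  case (Suc n)
  have e: "deriv (\<lambda>x. f x + g x) = (\<lambda>x. deriv f x + deriv g x)"
    using Suc.prems by (intro deriv_add_fun) auto
  have "Cn n (\<lambda>x. deriv f x + deriv g x)"
    using Suc.prems Suc.IH[of "deriv f" "deriv g"] by simp
  moreover have "\<forall>x. (\<lambda>x. f x + g x) differentiable (at x)"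
    using Suc.prems by auto
  ultimately show ?case by (simp only: Cn.simps e) simp
qed

lemma Cn_mult: "Cn n f \<Longrightarrow> Cn n g \<Longrightarrow> Cn n (\<lambda>x. f x * g x)"
proof (induction n arbitrary: f g)
  case 0 then show ?case by auto
next
  case (Suc n)
  have e: "deriv (\<lambda>x. f x * g x) = (\<lambda>x. f x * deriv g x + deriv f x * g x)"
    using Suc.prems by (intro deriv_mult_fun) auto
  have "Cn n (\<lambda>x. f x * deriv g x)"
    using Suc.prems Cn_Suc_mono[of n f] Suc.IH[of f "deriv g"] by simp
  moreover have "Cn n (\<lambda>x. deriv f x * g x)"
    using Suc.prems Cn_Suc_mono[of n g] Suc.IH[of "deriv f" g] by simp
  ultimately have "Cn n (\<lambda>x. f x * deriv g x + deriv f x * g x)" by (rule Cn_add)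
  moreover have "\<forall>x. (\<lambda>x. f x * g x) differentiable (at x)"
    using Suc.prems by auto
  ultimately show ?case by (simp only: Cn.simps e) simp
qed

lemma Cn_comp: "Cn n f \<Longrightarrow> Cn n g \<Longrightarrow> Cn n (\<lambda>x. f (g x))"
proof (induction n arbitrary: f g)
  case 0
  have "(\<lambda>x. f (g x)) differentiable (at x)" for x
    by (rule differentiable_compose) (rule Cn_diff[OF 0(1)], rule Cn_diff[OF 0(2)])
  then show ?case by simp
next
  case (Suc n)
  have "(\<lambda>x. f (g x)) differentiable (at x)" for x
    by (rule differentiable_compose) (rule Cn_diff[OF Suc.prems(1)], rule Cn_diff[OF Suc.prems(2)])
  then have d: "\<forall>x. (\<lambda>x. f (g x)) differentiable (at x)" by blast
  have e: "deriv (\<lambda>x. f (g x)) = (\<lambda>x. deriv f (g x) * deriv g x)"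
  proof
    fix x
    have "((\<lambda>x. f (g x)) has_real_derivative deriv f (g x) * deriv g x) (at x)"
      using Suc.prems Cn_diff[of "Suc n" f "g x"] Cn_diff[of "Suc n" g x]
      by (intro DERIV_chain2) (simp_all only: DERIV_deriv_iff_real_differentiable)
    then show "deriv (\<lambda>x. f (g x)) x = deriv f (g x) * deriv g x" by (rule DERIV_imp_deriv)
  qed
  have "Cn n (\<lambda>x. deriv f (g x))"
    using Suc.prems Cn_Suc_mono[of n g] Suc.IH[of "deriv f" g] by simp
  moreover have "Cn n (deriv g)" using Suc.prems by auto
  ultimately have "Cn n (\<lambda>x. deriv f (g x) * deriv g x)" by (rule Cn_mult)
  then show ?case using d by (simp only: Cn.simps e) simp
qed

lemma Cn_inverse: "Cn n f \<Longrightarrow> (\<And>x. f x \<noteq> 0) \<Longrightarrow> Cn n (\<lambda>x. inverse (f x))"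
proof (induction n arbitrary: f)
  case 0 then show ?case
    by (auto intro!: differentiable_inverse)
next
  case (Suc n)
  have d: "\<forall>x. (\<lambda>x. inverse (f x)) differentiable (at x)"
    using Suc.prems by (auto intro!: differentiable_inverse)
  have e: "deriv (\<lambda>x. inverse (f x)) = (\<lambda>x. ((-1) * deriv f x) * (inverse (f x) * inverse (f x)))"
  proof
    fix x
    have "((\<lambda>x. inverse (f x)) has_real_derivative - (deriv f x * inverse (f x ^ 2))) (at x)"
      using Suc.prems Cn_diff[of "Suc n" f x] DERIV_inverse_fun[of f "deriv f x" x UNIV]
      by (simp add: DERIV_deriv_iff_real_differentiable power2_eq_square)
    then show "deriv (\<lambda>x. inverse (f x)) x = ((-1) * deriv f x) * (inverse (f x) * inverse (f x))"
      by (simp add: DERIV_imp_deriv power2_eq_square)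
  qed
  have "Cn n (\<lambda>x. (-1) * deriv f x)" using Suc.prems by (intro Cn_mult Cn_const) auto
  moreover have "Cn n (\<lambda>x. inverse (f x))" using Suc.prems Cn_Suc_mono[of n f] Suc.IH[of f] by simp
  ultimately have "Cn n (\<lambda>x. ((-1) * deriv f x) * (inverse (f x) * inverse (f x)))"
    using Cn_mult by blast
  then show ?case using d by (simp only: Cn.simps e) simp
qed

lemma smooth_const: "smooth (\<lambda>x. c)"
  by (simp add: smooth_Cn Cn_const)
lemma smooth_id: "smooth (\<lambda>x. x)"
  by (simp add: smooth_Cn Cn_id)
lemma smooth_add: "smooth f \<Longrightarrow> smooth g \<Longrightarrow> smooth (\<lambda>x. f x + g x)"
  by (simp add: smooth_Cn Cn_add)
lemma smooth_mult: "smooth f \<Longrightarrow> smooth g \<Longrightarrow> smooth (\<lambda>x. f x * g x)"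
  by (simp add: smooth_Cn Cn_mult)
lemma smooth_comp: "smooth f \<Longrightarrow> smooth g \<Longrightarrow> smooth (\<lambda>x. f (g x))"
  by (simp add: smooth_Cn Cn_comp)
lemma smooth_inverse: "smooth f \<Longrightarrow> (\<And>x. f x \<noteq> 0) \<Longrightarrow> smooth (\<lambda>x. inverse (f x))"
  by (simp add: smooth_Cn Cn_inverse)
lemma smooth_deriv: "smooth f \<Longrightarrow> smooth (deriv f)"
  unfolding smooth_def by (metis Dn_Suc')
lemma smooth_Dn: "smooth f \<Longrightarrow> smooth (Dn n f)"
  by (induction n) (auto simp: smooth_deriv)
lemma smooth_diff: "smooth f \<Longrightarrow> f differentiable (at x)"
  unfolding smooth_def by (metis funpow_0)
lemma smooth_DERIV: "smooth f \<Longrightarrow> (f has_real_derivative deriv f x) (at x)"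
  using smooth_diff DERIV_deriv_iff_real_differentiable by blast
lemma smooth_isCont: "smooth f \<Longrightarrow> isCont f x"
  using smooth_diff differentiable_imp_continuous_within by blast
lemma smooth_cont: "smooth f \<Longrightarrow> continuous_on S f"
  using smooth_isCont continuous_at_imp_continuous_on by blast
lemma smooth_cmult: "smooth f \<Longrightarrow> smooth (\<lambda>x. c * f x)"
  using smooth_mult[OF smooth_const] by blast
lemma smooth_minus: "smooth f \<Longrightarrow> smooth g \<Longrightarrow> smooth (\<lambda>x. f x - g x)"
  using smooth_add[of f "\<lambda>x. (-1) * g x"] smooth_cmult[of g "-1"] by simp
lemma smooth_neg: "smooth f \<Longrightarrow> smooth (\<lambda>x. - f x)"
  using smooth_cmult[of f "-1"] by simp
lemma smooth_sum: "finite S \<Longrightarrow> (\<And>i. i \<in> S \<Longrightarrow> smooth (f i)) \<Longrightarrow> smooth (\<lambda>x. \<Sum>i\<in>S. f i x)"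
  by (induction S rule: finite_induct) (auto intro: smooth_add smooth_const)

lemma deriv_add_s: "smooth f \<Longrightarrow> smooth g \<Longrightarrow> deriv (\<lambda>x. f x + g x) = (\<lambda>x. deriv f x + deriv g x)"
  by (rule deriv_add_fun) (auto simp: smooth_diff)
lemma deriv_mult_s: "smooth f \<Longrightarrow> smooth g \<Longrightarrow> deriv (\<lambda>x. f x * g x) = (\<lambda>x. f x * deriv g x + deriv f x * g x)"
  by (rule deriv_mult_fun) (auto simp: smooth_diff)
lemma deriv_cmult_s: "smooth f \<Longrightarrow> deriv (\<lambda>x. c * f x) = (\<lambda>x. c * deriv f x)"
  by (rule deriv_cmult_fun) (auto simp: smooth_diff)
lemma deriv_minus_s: "smooth f \<Longrightarrow> smooth g \<Longrightarrow> deriv (\<lambda>x. f x - g x) = (\<lambda>x. deriv f x - deriv g x)"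
proof -
  assume a: "smooth f" "smooth g"
  have "deriv (\<lambda>x. f x + (-1) * g x) = (\<lambda>x. deriv f x + deriv (\<lambda>x. (-1) * g x) x)"
    using a by (intro deriv_add_s smooth_cmult)
  also have "deriv (\<lambda>x. (-1) * g x) = (\<lambda>x. (-1) * deriv g x)" using a by (intro deriv_cmult_s)
  finally show ?thesis by simp
qed
lemma deriv_sum_s: "finite S \<Longrightarrow> (\<And>i. i \<in> S \<Longrightarrow> smooth (f i)) \<Longrightarrow>
    deriv (\<lambda>x. \<Sum>i\<in>S. f i x) = (\<lambda>x. \<Sum>i\<in>S. deriv (f i) x)"
proof (induction S rule: finite_induct)
  case empty then show ?case by (simp add: deriv_const_fun)
next
  case (insert a S)
  have "deriv (\<lambda>x. \<Sum>i\<in>insert a S. f i x) = deriv (\<lambda>x. f a x + (\<Sum>i\<in>S. f i x))"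
    using insert by simp
  also have "\<dots> = (\<lambda>x. deriv (f a) x + deriv (\<lambda>x. \<Sum>i\<in>S. f i x) x)"
    using insert by (intro deriv_add_s smooth_sum) auto
  finally show ?case using insert by simp
qed

lemma Dn_add_s: "smooth f \<Longrightarrow> smooth g \<Longrightarrow> Dn n (\<lambda>x. f x + g x) = (\<lambda>x. Dn n f x + Dn n g x)"
  by (induction n arbitrary: f g) (simp_all add: Dn_Suc' deriv_add_s smooth_deriv del: funpow.simps)
lemma Dn_cmult_s: "smooth f \<Longrightarrow> Dn n (\<lambda>x. c * f x) = (\<lambda>x. c * Dn n f x)"
  by (induction n arbitrary: f) (simp_all add: Dn_Suc' deriv_cmult_s smooth_deriv del: funpow.simps)
lemma Dn_minus_s: "smooth f \<Longrightarrow> smooth g \<Longrightarrow> Dn n (\<lambda>x. f x - g x) = (\<lambda>x. Dn n f x - Dn n g x)"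
  by (induction n arbitrary: f g) (simp_all add: Dn_Suc' deriv_minus_s smooth_deriv del: funpow.simps)
lemma Dn_sum_s: "finite S \<Longrightarrow> (\<And>i. i \<in> S \<Longrightarrow> smooth (f i)) \<Longrightarrow>
    Dn n (\<lambda>x. \<Sum>i\<in>S. f i x) = (\<lambda>x. \<Sum>i\<in>S. Dn n (f i) x)"
proof (induction n arbitrary: f)
  case 0 then show ?case by simp
next
  case (Suc n)
  have "Dn (Suc n) (\<lambda>x. \<Sum>i\<in>S. f i x) = Dn n (\<lambda>x. \<Sum>i\<in>S. deriv (f i) x)"
    using Suc.prems by (simp only: Dn_Suc' deriv_sum_s)
  also have "\<dots> = (\<lambda>x. \<Sum>i\<in>S. Dn n (deriv (f i)) x)"
    using Suc.prems by (intro Suc.IH) (auto intro: smooth_deriv)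
  finally show ?case by (simp only: Dn_Suc')
qed
lemma Dn_zero: "Dn n (\<lambda>x. 0) = (\<lambda>x. 0::real)"
  by (induction n) (simp_all add: deriv_const_fun)
lemma Dn_const: assumes "n \<ge> 1" shows "Dn n (\<lambda>x. c) = (\<lambda>x. 0)"
proof (cases n)
  case 0 then show ?thesis using assms by simp
next
  case (Suc m) then show ?thesis
    by (simp only: Dn_Suc' deriv_const_fun Dn_zero)
qed
lemma Dn_add_nat: "Dn n (Dn m f) = Dn (n + m) f"
  by (simp add: funpow_add)
lemma Dn_Suc: "Dn (Suc n) f = deriv (Dn n f)"
  by simp

section \<open>Periodicity\<close>

definition per :: "(real \<Rightarrow> real) \<Rightarrow> bool" where
  "per f \<longleftrightarrow> (\<forall>x. f (x + 1) = f x)"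

lemma SP_iff: "f \<in> SP \<longleftrightarrow> smooth f \<and> per f"
  by (simp add: SP_def per_def)

lemma per_int: "per f \<Longrightarrow> f (x + of_int n) = f x"
proof -
  assume p: "per f"
  have pn: "f (x + of_nat m) = f x" for x m
  proof (induction m)
    case 0 then show ?case by simp
  next
    case (Suc m)
    have "f (x + of_nat (Suc m)) = f ((x + of_nat m) + 1)" by (simp add: algebra_simps)
    also have "\<dots> = f (x + of_nat m)" using p by (simp add: per_def)
    finally show ?case using Suc by simp
  qed
  show ?thesis
  proof (cases "n \<ge> 0")
    case True then show ?thesis using pn[of x "nat n"] by simp
  next
    case False
    then have "f (x + of_int n + of_nat (nat (-n))) = f (x + of_int n)" using pn by blast
    then show ?thesis using False by simp
  qed
qed

lemma per_deriv: "per f \<Longrightarrow> per (deriv f)"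
proof -
  assume p: "per f"
  have e: "(\<lambda>y. f (y + 1)) = f" using p by (auto simp: per_def)
  have "deriv f (x + 1) = deriv f x" for x
    unfolding deriv_def using DERIV_shift[of f _ x 1] e by simp
  then show ?thesis by (simp add: per_def)
qed

lemma per_Dn: "per f \<Longrightarrow> per (Dn n f)"
  by (induction n) (auto simp: per_deriv)

lemma SP_const: "(\<lambda>x. c) \<in> SP"
  by (simp add: SP_iff smooth_const per_def)
lemma SP_add: "f \<in> SP \<Longrightarrow> g \<in> SP \<Longrightarrow> (\<lambda>x. f x + g x) \<in> SP"
  by (simp add: SP_iff smooth_add per_def)
lemma SP_minus: "f \<in> SP \<Longrightarrow> g \<in> SP \<Longrightarrow> (\<lambda>x. f x - g x) \<in> SP"
  by (simp add: SP_iff smooth_minus per_def)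
lemma SP_neg: "f \<in> SP \<Longrightarrow> (\<lambda>x. - f x) \<in> SP"
  by (simp add: SP_iff smooth_neg per_def)
lemma SP_mult: "f \<in> SP \<Longrightarrow> g \<in> SP \<Longrightarrow> (\<lambda>x. f x * g x) \<in> SP"
  by (simp add: SP_iff smooth_mult per_def)
lemma SP_cmult: "f \<in> SP \<Longrightarrow> (\<lambda>x. c * f x) \<in> SP"
  by (simp add: SP_iff smooth_cmult per_def)
lemma SP_deriv: "f \<in> SP \<Longrightarrow> deriv f \<in> SP"
  by (simp add: SP_iff smooth_deriv per_deriv)
lemma SP_Dn: "f \<in> SP \<Longrightarrow> Dn n f \<in> SP"
  by (simp add: SP_iff smooth_Dn per_Dn)
lemma SP_sum: "finite S \<Longrightarrow> (\<And>i. i \<in> S \<Longrightarrow> f i \<in> SP) \<Longrightarrow> (\<lambda>x. \<Sum>i\<in>S. f i x) \<in> SP"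
  by (induction S rule: finite_induct) (auto intro: SP_add SP_const)
lemma SP_smooth: "f \<in> SP \<Longrightarrow> smooth f"
  by (simp add: SP_iff)
lemma SP_per: "f \<in> SP \<Longrightarrow> f (x + 1) = f x"
  by (simp add: SP_def)
lemma SP_comp: "f \<in> SP \<Longrightarrow> smooth g \<Longrightarrow> (\<And>x. g (x + 1) = g x + 1) \<Longrightarrow> (\<lambda>x. f (g x)) \<in> SP"
  by (simp add: SP_iff smooth_comp per_def)

lemma Diffp_smooth: "f \<in> Diffp \<Longrightarrow> smooth f"
  by (simp add: Diffp_def)
lemma Diffp_pos: "f \<in> Diffp \<Longrightarrow> deriv f x > 0"
  by (simp add: Diffp_def)
lemma Diffp_shift: "f \<in> Diffp \<Longrightarrow> f (x + 1) = f x + 1"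
  by (simp add: Diffp_def)

lemma Diffp_shift_int: assumes "f \<in> Diffp" shows "f (x + of_int n) = f x + of_int n"
proof -
  have pn: "f (x + of_nat m) = f x + of_nat m" for x m
  proof (induction m)
    case 0 then show ?case by simp
  next
    case (Suc m)
    have "f (x + of_nat (Suc m)) = f ((x + of_nat m) + 1)" by (simp add: algebra_simps)
    also have "\<dots> = f (x + of_nat m) + 1" using assms by (simp add: Diffp_shift)
    finally show ?case using Suc by simp
  qed
  show ?thesis
  proof (cases "n \<ge> 0")
    case True then show ?thesis using pn[of x "nat n"] by simp
  next
    case False
    then have "f (x + of_int n + of_nat (nat (-n))) = f (x + of_int n) + of_nat (nat (-n))" using pn by blast
    then show ?thesis using False by simp
  qed
qed

lemma Diffp_mono: assumes "f \<in> Diffp" "x < y" shows "f x < f y"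
  using assms(2) by (rule DERIV_pos_imp_increasing)
    (use assms(1) in \<open>auto intro!: exI[of _ "deriv f _"] smooth_DERIV Diffp_smooth Diffp_pos\<close>)

lemma Diffp_inj: "f \<in> Diffp \<Longrightarrow> inj f"
  by (metis Diffp_mono injI linorder_neqE_linordered_idom order_less_irrefl)

lemma Diffp_surj: assumes "f \<in> Diffp" shows "surj f"
proof -
  have "\<exists>x. f x = y" for y
  proof -
    define n where "n = \<lfloor>y - f 0\<rfloor>"
    have a: "f (of_int n) = f 0 + of_int n" using Diffp_shift_int[OF assms, of 0 n] by simp
    have b: "f (of_int n + 1) = f 0 + of_int n + 1" using a Diffp_shift[OF assms] by simp
    have "f (of_int n) \<le> y" using a n_def by linarith
    moreover have "y \<le> f (of_int n + 1)" using b n_def by linarith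
    moreover have "continuous_on {of_int n .. of_int n + 1} f"
      using assms by (intro smooth_cont Diffp_smooth)
    ultimately show ?thesis using IVT'[of f "of_int n" y "of_int n + 1"] by auto
  qed
  then show ?thesis by (metis surjI)
qed

lemma Diffp_f_inv: "f \<in> Diffp \<Longrightarrow> f (inv f y) = y"
  by (meson Diffp_surj surj_f_inv_f)
lemma Diffp_inv_f: "f \<in> Diffp \<Longrightarrow> inv f (f x) = x"
  by (meson Diffp_inj inv_f_f)

lemma Diffp_inv_shift: assumes "f \<in> Diffp" shows "inv f (y + 1) = inv f y + 1"
proof -
  have "f (inv f y + 1) = y + 1" using assms by (simp add: Diffp_shift Diffp_f_inv)
  then have "inv f (f (inv f y + 1)) = inv f (y + 1)" by simp
  then show ?thesis using assms by (simp add: Diffp_inv_f)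
qed

lemma Diffp_inv_DERIV: assumes "f \<in> Diffp"
  shows "(inv f has_real_derivative inverse (deriv f (inv f y))) (at y)"
proof -
  have c0: "isCont (inv f) (f (inv f y))"
    using isCont_inverse_function[where d=1 and x="inv f y" and g="inv f" and f=f]
      assms Diffp_inv_f Diffp_smooth smooth_isCont by simp
  have c: "isCont (inv f) y" using c0 assms by (simp add: Diffp_f_inv)
  have d: "DERIV f (inv f y) :> deriv f (inv f y)" using assms Diffp_smooth smooth_DERIV by blast
  have n: "deriv f (inv f y) \<noteq> 0" using assms Diffp_pos by (metis less_irrefl)
  show ?thesis
    by (rule DERIV_inverse_function[where a="y - 1" and b="y + 1" and g="inv f" and x=y and f=f, OF d n])
       (use assms c in \<open>simp_all add: Diffp_f_inv\<close>)
qed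

lemma Diffp_inv_deriv: assumes "f \<in> Diffp"
  shows "deriv (inv f) = (\<lambda>y. inverse (deriv f (inv f y)))"
  using Diffp_inv_DERIV[OF assms] DERIV_imp_deriv by blast

lemma Diffp_inv_smooth: assumes "f \<in> Diffp" shows "smooth (inv f)"
proof -
  have "Cn n (inv f)" for n
  proof (induction n)
    case 0
    have "\<forall>x. inv f differentiable (at x)"
      using Diffp_inv_DERIV[OF assms] real_differentiable_def by blast
    then show ?case by simp
  next
    case (Suc n)
    have "Cn n (deriv f)" using assms Diffp_smooth smooth_deriv smooth_Cn by blast
    then have "Cn n (\<lambda>y. deriv f (inv f y))" using Suc Cn_comp by blast
    then have "Cn n (\<lambda>y. inverse (deriv f (inv f y)))"
      using Cn_inverse Diffp_pos[OF assms] by (metis less_irrefl)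
    moreover have "\<forall>x. inv f differentiable (at x)"
      using Diffp_inv_DERIV[OF assms] real_differentiable_def by blast
    ultimately show ?case using Diffp_inv_deriv[OF assms] by simp
  qed
  then show ?thesis by (simp add: smooth_Cn)
qed

lemma Diffp_inv: assumes "f \<in> Diffp" shows "inv f \<in> Diffp"
proof -
  have "deriv (inv f) x > 0" for x
    using Diffp_pos[OF assms, of "inv f x"] by (simp add: Diffp_inv_deriv[OF assms])
  then show ?thesis
    using Diffp_inv_smooth[OF assms] Diffp_inv_shift[OF assms] unfolding Diffp_def by blast
qed

lemma Diffp_deriv_inv_mult: assumes "f \<in> Diffp"
  shows "deriv f (inv f y) * deriv (inv f) y = 1"
proof -
  have "deriv f (inv f y) \<noteq> 0" using Diffp_pos[OF assms] by (metis less_irrefl)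
  then show ?thesis by (simp add: Diffp_inv_deriv[OF assms])
qed

lemma Diffp_deriv_SP: assumes "f \<in> Diffp" shows "deriv f \<in> SP"
proof -
  have e: "(\<lambda>y. f (y + 1)) = (\<lambda>y. f y + 1)" using assms Diffp_shift by blast
  have "deriv f (x + 1) = deriv f x" for x
  proof -
    have "deriv f (x + 1) = deriv (\<lambda>y. f (y + 1)) x"
      unfolding deriv_def using DERIV_shift[of f _ x 1] by simp
    also have "\<dots> = deriv (\<lambda>y. f y + 1) x" using e by simp
    also have "\<dots> = deriv f x + deriv (\<lambda>y. 1) x"
      using assms by (simp add: deriv_add_s Diffp_smooth smooth_const)
    finally show ?thesis by (simp add: deriv_const_fun)
  qed
  then show ?thesis using assms by (simp add: SP_iff per_def smooth_deriv Diffp_smooth)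
qed

lemma SP_comp_Diffp: "\<phi> \<in> SP \<Longrightarrow> f \<in> Diffp \<Longrightarrow> (\<lambda>x. \<phi> (f x)) \<in> SP"
  by (rule SP_comp) (auto simp: Diffp_smooth Diffp_shift)

definition tf :: "complex \<Rightarrow> complex \<Rightarrow> real \<Rightarrow> real" where
  "tf w c = (\<lambda>x. Re (w * exp (c * of_real x)))"

lemma tf_DERIV: "(tf w c has_real_derivative tf (w * c) c x) (at x)"
proof -
  have "((\<lambda>z. w * exp (c * z)) has_field_derivative w * (exp (c * of_real x) * c)) (at (of_real x))"
    by (auto intro!: derivative_eq_intros)
  then have "((\<lambda>y. w * exp (c * of_real y)) has_vector_derivative w * (exp (c * of_real x) * c)) (at x)"
    by (rule has_vector_derivative_real_field)
  then have "((\<lambda>y. Re (w * exp (c * of_real y))) has_real_derivative Re (w * (exp (c * of_real x) * c))) (at x)"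
    by (rule has_field_derivative_Re)
  then show ?thesis unfolding tf_def by (simp add: ac_simps)
qed

lemma tf_deriv: "deriv (tf w c) = tf (w * c) c"
  using tf_DERIV DERIV_imp_deriv by blast

lemma tf_Dn: "Dn n (tf w c) = tf (w * c ^ n) c"
  by (induction n) (simp_all add: tf_deriv ac_simps)

lemma tf_smooth: "smooth (tf w c)"
  unfolding smooth_def tf_Dn using tf_DERIV real_differentiable_def by blast

lemma tf_SP: "tf w (\<i> * of_real (2 * pi * of_nat m)) \<in> SP"
proof -
  have "exp (\<i> * of_real (2 * pi * of_nat m)) = 1"
    using exp_integer_2pi[of "of_nat m"] by (simp add: ac_simps)
  then have "tf w (\<i> * of_real (2 * pi * of_nat m)) (x + 1) = tf w (\<i> * of_real (2 * pi * of_nat m)) x" for x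
    unfolding tf_def by (simp add: distrib_left exp_add)
  then show ?thesis using tf_smooth by (simp add: SP_iff per_def)
qed

lemma Re_ofreal_mult: "Re (of_real r * z) = r * Re z"
  by simp

lemma tf_Dn_at: "Dn i (tf w c) x0 = Re (w * c ^ i * exp (c * of_real x0))"
  by (simp only: tf_Dn, simp only: tf_def)

lemma coeffs_zero_at:
  fixes a :: "nat \<Rightarrow> real"
  assumes h: "\<And>\<phi>. \<phi> \<in> SP \<Longrightarrow> (\<Sum>i\<le>n. a i * Dn i \<phi> x0) = 0"
    and "i \<le> n"
  shows "a i = 0"
proof -
  define P where "P = (\<Sum>i\<le>n. monom (complex_of_real (a i)) i)"
  have root: "poly P (\<i> * of_real (2 * pi * of_nat m)) = 0" for m
  proof -
    define c where "c = \<i> * of_real (2 * pi * of_nat m)"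
    define z0 where "z0 = exp (c * of_real x0)"
    have z0: "z0 \<noteq> 0" by (simp add: z0_def)
    have pc: "poly P c = (\<Sum>i\<le>n. of_real (a i) * c ^ i)"
      by (simp add: P_def poly_sum poly_monom)
    have gen: "Re (v * poly P c) = 0" for v
    proof -
      have "0 = (\<Sum>i\<le>n. a i * Dn i (tf (v * inverse z0) c) x0)"
        using h[OF tf_SP[of "v * inverse z0" m]] by (simp add: c_def)
      also have "\<dots> = (\<Sum>i\<le>n. a i * Re (v * inverse z0 * c ^ i * z0))"
        by (simp only: tf_Dn_at z0_def)
      also have "\<dots> = (\<Sum>i\<le>n. Re (v * (of_real (a i) * c ^ i)))"
      proof (intro sum.cong refl)
        fix i
        have "v * inverse z0 * c ^ i * z0 = v * c ^ i" using z0 by (simp add: field_simps)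
        moreover have "v * (of_real (a i) * c ^ i) = of_real (a i) * (v * c ^ i)" by (simp add: ac_simps)
        ultimately show "a i * Re (v * inverse z0 * c ^ i * z0) = Re (v * (of_real (a i) * c ^ i))"
          by (simp only: Re_ofreal_mult)
      qed
      also have "\<dots> = Re (\<Sum>i\<le>n. v * (of_real (a i) * c ^ i))"
        by (simp only: Re_sum)
      also have "\<dots> = Re (v * poly P c)"
        by (simp only: pc sum_distrib_left)
      finally show ?thesis by simp
    qed
    have "Re (poly P c) = 0" using gen[of 1] by simp
    moreover have "Im (poly P c) = 0" using gen[of "- \<i>"] by simp
    ultimately show ?thesis unfolding c_def[symmetric] by (simp add: complex_eq_iff)
  qed
  have "P = 0"
  proof (rule ccontr)
    assume "P \<noteq> 0"
    then have fin: "finite {z. poly P z = 0}" by (rule poly_roots_finite)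
    have "range (\<lambda>m::nat. \<i> * of_real (2 * pi * of_nat m)) \<subseteq> {z. poly P z = 0}"
      using root by auto
    moreover have "inj (\<lambda>m::nat. \<i> * complex_of_real (2 * pi * of_nat m))"
      by (rule injI) (simp add: complex_eq_iff)
    then have "infinite (range (\<lambda>m::nat. \<i> * complex_of_real (2 * pi * of_nat m)))"
      using finite_imageD by blast
    ultimately show False using fin finite_subset by blast
  qed
  then have "coeff P i = 0" by simp
  moreover have "coeff P i = complex_of_real (a i)"
    using assms(2) by (simp add: P_def coeff_sum)
  ultimately show ?thesis by simp
qed

definition opc :: "nat \<Rightarrow> (nat \<Rightarrow> real \<Rightarrow> real) \<Rightarrow> op" where
  "opc n a \<phi> = (\<lambda>x. \<Sum>i\<le>n. a i x * Dn i \<phi> x)"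

definition isdiff :: "nat \<Rightarrow> op \<Rightarrow> bool" where
  "isdiff n F \<longleftrightarrow> (\<exists>a. (\<forall>i. a i \<in> SP) \<and> (\<forall>\<phi>\<in>SP. F \<phi> = opc n a \<phi>))"

definition tr :: "nat \<Rightarrow> (nat \<Rightarrow> real \<Rightarrow> real) \<Rightarrow> nat \<Rightarrow> real \<Rightarrow> real" where
  "tr n a = (\<lambda>i. if i \<le> n then a i else (\<lambda>x. 0))"

lemma opc_tr: "opc n (tr n a) = opc n a"
  unfolding opc_def tr_def by (intro ext sum.cong) auto

lemma tr_SP: "(\<And>i. a i \<in> SP) \<Longrightarrow> tr n a i \<in> SP"
  by (simp add: tr_def SP_const)

lemma opc_SP: "(\<And>i. a i \<in> SP) \<Longrightarrow> \<phi> \<in> SP \<Longrightarrow> opc n a \<phi> \<in> SP"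
  unfolding opc_def by (intro SP_sum SP_mult SP_Dn) auto

lemma isdiff_SP: "isdiff n F \<Longrightarrow> \<phi> \<in> SP \<Longrightarrow> F \<phi> \<in> SP"
  unfolding isdiff_def using opc_SP by metis

lemma opc_unique:
  assumes "\<And>\<phi>. \<phi> \<in> SP \<Longrightarrow> opc n a \<phi> = opc n b \<phi>" "i \<le> n"
  shows "a i = b i"
proof
  fix x0
  have "\<And>\<phi>. \<phi> \<in> SP \<Longrightarrow> (\<Sum>i\<le>n. (a i x0 - b i x0) * Dn i \<phi> x0) = 0"
  proof -
    fix \<phi> assume "\<phi> \<in> SP"
    then have "opc n a \<phi> x0 = opc n b \<phi> x0" using assms by simp
    then show "(\<Sum>i\<le>n. (a i x0 - b i x0) * Dn i \<phi> x0) = 0"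
      unfolding opc_def by (simp add: left_diff_distrib sum_subtractf)
  qed
  from coeffs_zero_at[OF this assms(2)] show "a i x0 = b i x0" by simp
qed

lemma is_coeffs_iff: "is_coeffs k A a \<longleftrightarrow> (\<forall>i. a i \<in> SP) \<and> (\<forall>i>k. a i = (\<lambda>x. 0)) \<and> (\<forall>\<phi>\<in>SP. A \<phi> = opc k a \<phi>)"
  unfolding is_coeffs_def opc_def by simp

lemma is_coeffs_unique: "is_coeffs k A a \<Longrightarrow> is_coeffs k A b \<Longrightarrow> a = b"
proof
  fix i assume a: "is_coeffs k A a" and b: "is_coeffs k A b"
  show "a i = b i"
  proof (cases "i \<le> k")
    case True then show ?thesis using a b opc_unique[of k a b i] by (auto simp: is_coeffs_iff)
  next
    case False then show ?thesis using a b by (auto simp: is_coeffs_iff)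
  qed
qed

lemma coeffs_eq: "is_coeffs k A a \<Longrightarrow> coeffs k A = a"
  unfolding coeffs_def using is_coeffs_unique by blast

lemma Dk_is_coeffs: "A \<in> Dk k \<Longrightarrow> is_coeffs k A (coeffs k A)"
  unfolding Dk_def using coeffs_eq by auto

lemma Dk_SP: "A \<in> Dk k \<Longrightarrow> coeffs k A i \<in> SP"
  using Dk_is_coeffs is_coeffs_iff by blast

lemma Dk_app: "A \<in> Dk k \<Longrightarrow> \<phi> \<in> SP \<Longrightarrow> A \<phi> = opc k (coeffs k A) \<phi>"
  using Dk_is_coeffs is_coeffs_iff by blast

lemma Dk_high: "A \<in> Dk k \<Longrightarrow> i > k \<Longrightarrow> coeffs k A i = (\<lambda>x. 0)"
  using Dk_is_coeffs is_coeffs_iff by blast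

lemma Dk_out: "A \<in> Dk k \<Longrightarrow> \<phi> \<notin> SP \<Longrightarrow> A \<phi> = (\<lambda>x. 0)"
  unfolding Dk_def by blast

lemma mkop_SP: "\<phi> \<in> SP \<Longrightarrow> mkop F \<phi> = F \<phi>"
  by (simp add: mkop_def)
lemma mkop_nSP: "\<phi> \<notin> SP \<Longrightarrow> mkop F \<phi> = (\<lambda>x. 0)"
  by (simp add: mkop_def)

lemma mkop_cong: "(\<And>\<phi>. \<phi> \<in> SP \<Longrightarrow> F \<phi> = G \<phi>) \<Longrightarrow> mkop F = mkop G"
  unfolding mkop_def by auto

lemma Dk_mkop: "A \<in> Dk k \<Longrightarrow> A = mkop A"
  unfolding mkop_def using Dk_out by fastforce

lemma Dk_mkop_opc: "A \<in> Dk k \<Longrightarrow> A = mkop (opc k (coeffs k A))"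
  by (metis Dk_app Dk_mkop mkop_cong)

lemma is_coeffs_mkop: "(\<And>i. a i \<in> SP) \<Longrightarrow> is_coeffs k (mkop (opc k a)) (tr k a)"
  unfolding is_coeffs_iff by (auto simp: tr_SP mkop_SP opc_tr) (auto simp: tr_def)

lemma coeffs_mkop: "(\<And>i. a i \<in> SP) \<Longrightarrow> coeffs k (mkop (opc k a)) = tr k a"
  using is_coeffs_mkop coeffs_eq by blast

lemma mkop_opc_Dk: "(\<And>i. a i \<in> SP) \<Longrightarrow> mkop (opc k a) \<in> Dk k"
  unfolding Dk_def using is_coeffs_mkop mkop_nSP by blast

lemma isdiff_Dk: "isdiff k F \<Longrightarrow> mkop F \<in> Dk k"
proof -
  assume "isdiff k F"
  then obtain a where a: "\<And>i. a i \<in> SP" "\<And>\<phi>. \<phi> \<in> SP \<Longrightarrow> F \<phi> = opc k a \<phi>"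
    unfolding isdiff_def by blast
  then have "mkop F = mkop (opc k a)" by (intro mkop_cong) auto
  then show ?thesis using mkop_opc_Dk a by simp
qed

lemma isdiff_Dk_coeffs:
  assumes "(\<And>i. a i \<in> SP)" "\<And>\<phi>. \<phi> \<in> SP \<Longrightarrow> F \<phi> = opc k a \<phi>"
  shows "coeffs k (mkop F) = tr k a"
proof -
  have "mkop F = mkop (opc k a)" using assms by (intro mkop_cong) auto
  then show ?thesis using coeffs_mkop assms by simp
qed

lemma Dk_isdiff: "A \<in> Dk k \<Longrightarrow> isdiff k A"
  unfolding isdiff_def using Dk_SP Dk_app by blast

lemma isdiff_cong: "isdiff n F \<Longrightarrow> (\<And>\<phi>. \<phi> \<in> SP \<Longrightarrow> G \<phi> = F \<phi>) \<Longrightarrow> isdiff n G"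
  unfolding isdiff_def by auto

lemma isdiff_monom: assumes "h \<in> SP" "j \<le> n" shows "isdiff n (\<lambda>\<phi> x. h x * Dn j \<phi> x)"
  unfolding isdiff_def
proof (intro exI conjI ballI allI)
  let ?a = "\<lambda>i. if i = j then h else (\<lambda>x. 0)"
  show "?a i \<in> SP" for i using assms by (simp add: SP_const)
  fix \<phi> :: "real \<Rightarrow> real"
  show "(\<lambda>x. h x * Dn j \<phi> x) = opc n ?a \<phi>"
    unfolding opc_def
  proof
    fix x
    have "(\<Sum>i\<le>n. ?a i x * Dn i \<phi> x) = (\<Sum>i\<le>n. if i = j then h x * Dn i \<phi> x else 0)"
      by (rule sum.cong) auto
    also have "\<dots> = h x * Dn j \<phi> x" using assms(2) by (simp add: sum.delta)
    finally show "h x * Dn j \<phi> x = (\<Sum>i\<le>n. ?a i x * Dn i \<phi> x)" by simp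
  qed
qed

lemma isdiff_id: "isdiff n (\<lambda>\<phi>. \<phi>)"
proof -
  have "isdiff n (\<lambda>\<phi> x. 1 * Dn 0 \<phi> x)" using isdiff_monom[OF SP_const[of 1], of 0 n] by simp
  then show ?thesis by (rule isdiff_cong) simp
qed

lemma isdiff_zero: "isdiff n (\<lambda>\<phi> x. 0)"
  unfolding isdiff_def by (rule exI[of _ "\<lambda>i x. 0"]) (auto simp: opc_def SP_const)

lemma isdiff_add: assumes "isdiff n F" "isdiff n G" shows "isdiff n (\<lambda>\<phi> x. F \<phi> x + G \<phi> x)"
proof -
  obtain a where a: "\<And>i. a i \<in> SP" "\<And>\<phi>. \<phi> \<in> SP \<Longrightarrow> F \<phi> = opc n a \<phi>"
    using assms(1) unfolding isdiff_def by blast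
  obtain b where b: "\<And>i. b i \<in> SP" "\<And>\<phi>. \<phi> \<in> SP \<Longrightarrow> G \<phi> = opc n b \<phi>"
    using assms(2) unfolding isdiff_def by blast
  show ?thesis unfolding isdiff_def
    by (rule exI[of _ "\<lambda>i x. a i x + b i x"])
      (auto simp: a b SP_add opc_def distrib_right sum.distrib)
qed

lemma isdiff_mult: assumes "h \<in> SP" "isdiff n F" shows "isdiff n (\<lambda>\<phi> x. h x * F \<phi> x)"
proof -
  obtain a where a: "\<And>i. a i \<in> SP" "\<And>\<phi>. \<phi> \<in> SP \<Longrightarrow> F \<phi> = opc n a \<phi>"
    using assms(2) unfolding isdiff_def by blast
  show ?thesis unfolding isdiff_def
    by (rule exI[of _ "\<lambda>i x. h x * a i x"])
      (auto simp: a assms(1) SP_mult opc_def sum_distrib_left ac_simps)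
qed

lemma isdiff_cmult: "isdiff n F \<Longrightarrow> isdiff n (\<lambda>\<phi> x. c * F \<phi> x)"
  using isdiff_mult[OF SP_const] by blast

lemma isdiff_neg: "isdiff n F \<Longrightarrow> isdiff n (\<lambda>\<phi> x. - F \<phi> x)"
  using isdiff_cmult[of n F "-1"] by simp

lemma isdiff_minus: "isdiff n F \<Longrightarrow> isdiff n G \<Longrightarrow> isdiff n (\<lambda>\<phi> x. F \<phi> x - G \<phi> x)"
  using isdiff_add[of n F "\<lambda>\<phi> x. - G \<phi> x"] isdiff_neg by simp

lemma isdiff_sum: "finite S \<Longrightarrow> (\<And>i. i \<in> S \<Longrightarrow> isdiff n (F i)) \<Longrightarrow> isdiff n (\<lambda>\<phi> x. \<Sum>i\<in>S. F i \<phi> x)"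
proof (induction S rule: finite_induct)
  case empty then show ?case using isdiff_zero by simp
next
  case (insert a S)
  then have "isdiff n (\<lambda>\<phi> x. F a \<phi> x + (\<Sum>i\<in>S. F i \<phi> x))" by (intro isdiff_add) auto
  then show ?case using insert by simp
qed

lemma isdiff_mono: assumes "isdiff n F" "n \<le> m" shows "isdiff m F"
proof -
  obtain a where a: "\<And>i. a i \<in> SP" "\<And>\<phi>. \<phi> \<in> SP \<Longrightarrow> F \<phi> = opc n a \<phi>"
    using assms(1) unfolding isdiff_def by blast
  have "isdiff m (\<lambda>\<phi> x. \<Sum>i\<le>n. a i x * Dn i \<phi> x)"
    using assms(2) by (intro isdiff_sum isdiff_monom a) auto
  then show ?thesis by (rule isdiff_cong) (simp add: a opc_def)
qed

lemma isdiff_deriv: assumes "isdiff n F" shows "isdiff (Suc n) (\<lambda>\<phi>. deriv (F \<phi>))"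
proof -
  obtain a where a: "\<And>i. a i \<in> SP" "\<And>\<phi>. \<phi> \<in> SP \<Longrightarrow> F \<phi> = opc n a \<phi>"
    using assms(1) unfolding isdiff_def by blast
  have "isdiff (Suc n) (\<lambda>\<phi> x. \<Sum>i\<le>n. a i x * Dn (Suc i) \<phi> x + deriv (a i) x * Dn i \<phi> x)"
    by (intro isdiff_sum isdiff_add isdiff_monom a SP_deriv) auto
  then show ?thesis
  proof (rule isdiff_cong)
    fix \<phi> :: "real \<Rightarrow> real" assume p: "\<phi> \<in> SP"
    have "deriv (F \<phi>) = deriv (\<lambda>x. \<Sum>i\<le>n. a i x * Dn i \<phi> x)" using a p by (simp add: opc_def)
    also have "\<dots> = (\<lambda>x. \<Sum>i\<le>n. deriv (\<lambda>x. a i x * Dn i \<phi> x) x)"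
      using a p by (intro deriv_sum_s) (auto intro!: SP_smooth SP_mult SP_Dn)
    also have "\<dots> = (\<lambda>x. \<Sum>i\<le>n. a i x * Dn (Suc i) \<phi> x + deriv (a i) x * Dn i \<phi> x)"
      using a p by (simp add: deriv_mult_s SP_smooth SP_Dn)
    finally show "deriv (F \<phi>) = (\<lambda>x. \<Sum>i\<le>n. a i x * Dn (Suc i) \<phi> x + deriv (a i) x * Dn i \<phi> x)" .
  qed
qed

lemma isdiff_Dn: "isdiff n F \<Longrightarrow> isdiff (n + m) (\<lambda>\<phi>. Dn m (F \<phi>))"
  by (induction m) (auto dest: isdiff_deriv)

lemma act_eq: assumes "f \<in> Diffp"
  shows "act f A = mkop (\<lambda>\<phi> x. deriv (inv f) x * A (\<lambda>y. \<phi> (f y)) (inv f x))"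
proof -
  have p0: "deriv f x powr 0 = 1" for x using Diffp_pos[OF assms, of x] by simp
  have p1: "deriv (inv f) x powr 1 = deriv (inv f) x" for x
    using Diffp_pos[OF Diffp_inv[OF assms], of x] by simp
  show ?thesis unfolding act_def rho_inv_def p0 p1 by simp
qed

lemma act_mkop: assumes "f \<in> Diffp"
  shows "act f (mkop F) = mkop (\<lambda>\<phi> x. deriv (inv f) x * F (\<lambda>y. \<phi> (f y)) (inv f x))"
  unfolding act_eq[OF assms] by (rule mkop_cong) (simp add: mkop_SP SP_comp_Diffp assms)

definition Tf :: "(real \<Rightarrow> real) \<Rightarrow> nat \<Rightarrow> op" where
  "Tf f i \<phi> = (\<lambda>x. Dn i (\<lambda>y. \<phi> (f y)) (inv f x))"

lemma inv_SP: "f \<in> Diffp \<Longrightarrow> h \<in> SP \<Longrightarrow> (\<lambda>x. h (inv f x)) \<in> SP"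
  using SP_comp_Diffp Diffp_inv by blast

lemma Tf_isdiff: assumes "f \<in> Diffp" shows "isdiff i (Tf f i)"
proof (induction i)
  case 0
  show ?case using isdiff_id
  proof (rule isdiff_cong)
    fix \<phi> :: "real \<Rightarrow> real"
    show "Tf f 0 \<phi> = \<phi>" unfolding Tf_def by (simp add: Diffp_f_inv[OF assms])
  qed
next
  case (Suc i)
  have h: "(\<lambda>x. deriv f (inv f x)) \<in> SP" using inv_SP[OF assms Diffp_deriv_SP[OF assms]] .
  have "isdiff (Suc i) (\<lambda>\<phi> x. deriv f (inv f x) * deriv (Tf f i \<phi>) x)"
    by (rule isdiff_mult[OF h isdiff_deriv[OF Suc]])
  then show ?case
  proof (rule isdiff_cong)
    fix \<phi> :: "real \<Rightarrow> real" assume p: "\<phi> \<in> SP"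
    let ?u = "Dn i (\<lambda>y. \<phi> (f y))"
    have su: "smooth ?u" using smooth_Dn[OF SP_smooth[OF SP_comp_Diffp[OF p assms]]] .
    have "deriv (Tf f i \<phi>) x = deriv ?u (inv f x) * deriv (inv f) x" for x
    proof -
      have "((\<lambda>x. ?u (inv f x)) has_real_derivative deriv ?u (inv f x) * deriv (inv f) x) (at x)"
        using DERIV_chain2[OF smooth_DERIV[OF su, of "inv f x"] smooth_DERIV[OF Diffp_inv_smooth[OF assms], of x]] .
      then show ?thesis unfolding Tf_def by (rule DERIV_imp_deriv)
    qed
    then have "deriv f (inv f x) * deriv (Tf f i \<phi>) x = deriv ?u (inv f x)" for x
    proof -
      assume e: "\<And>x. deriv (Tf f i \<phi>) x = deriv ?u (inv f x) * deriv (inv f) x"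
      have "deriv f (inv f x) * deriv (Tf f i \<phi>) x = deriv ?u (inv f x) * (deriv f (inv f x) * deriv (inv f) x)"
        unfolding e by (simp only: ac_simps)
      then show ?thesis using Diffp_deriv_inv_mult[OF assms, of x] by simp
    qed
    then show "Tf f (Suc i) \<phi> = (\<lambda>x. deriv f (inv f x) * deriv (Tf f i \<phi>) x)"
      by (simp only: Tf_def Dn_Suc)
  qed
qed

lemma conj_isdiff: assumes "isdiff n F" "f \<in> Diffp"
  shows "isdiff n (\<lambda>\<phi> x. F (\<lambda>y. \<phi> (f y)) (inv f x))"
proof -
  obtain a where a: "\<And>i. a i \<in> SP" "\<And>\<phi>. \<phi> \<in> SP \<Longrightarrow> F \<phi> = opc n a \<phi>"
    using assms(1) unfolding isdiff_def by blast
  have "isdiff n (\<lambda>\<phi> x. \<Sum>i\<le>n. a i (inv f x) * Tf f i \<phi> x)"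
    by (rule isdiff_sum) (auto intro!: isdiff_mult[OF inv_SP[OF assms(2) a(1)]] isdiff_mono[OF Tf_isdiff[OF assms(2)]])
  then show ?thesis
    by (rule isdiff_cong) (simp add: a SP_comp_Diffp assms(2) opc_def Tf_def)
qed

lemma act_isdiff: assumes "isdiff n F" "f \<in> Diffp"
  shows "isdiff n (\<lambda>\<phi> x. deriv (inv f) x * F (\<lambda>y. \<phi> (f y)) (inv f x))"
  by (rule isdiff_mult[OF Diffp_deriv_SP[OF Diffp_inv[OF assms(2)]] conj_isdiff[OF assms]])

lemma act_Dk: assumes "A \<in> Dk k" "f \<in> Diffp" shows "act f A \<in> Dk k"
  unfolding act_eq[OF assms(2)] by (rule isdiff_Dk[OF act_isdiff[OF Dk_isdiff[OF assms(1)] assms(2)]])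

abbreviation I01 :: "(real \<Rightarrow> real) \<Rightarrow> real" where
  "I01 h \<equiv> integral {0..1} h"

lemma SP_integrable: "h \<in> SP \<Longrightarrow> h integrable_on {a..b}"
  by (intro integrable_continuous_real smooth_cont SP_smooth)

lemma SP_contin: "h \<in> SP \<Longrightarrow> continuous_on S h"
  by (intro smooth_cont SP_smooth)

lemma I01_add: "f \<in> SP \<Longrightarrow> g \<in> SP \<Longrightarrow> I01 (\<lambda>x. f x + g x) = I01 f + I01 g"
  by (intro integral_add SP_integrable)
lemma I01_minus: "f \<in> SP \<Longrightarrow> g \<in> SP \<Longrightarrow> I01 (\<lambda>x. f x - g x) = I01 f - I01 g"
  by (intro integral_diff SP_integrable)
lemma I01_cmult: "I01 (\<lambda>x. c * f x) = c * I01 f"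
  by simp
lemma I01_sum: "finite S \<Longrightarrow> (\<And>i. i \<in> S \<Longrightarrow> f i \<in> SP) \<Longrightarrow> I01 (\<lambda>x. \<Sum>i\<in>S. f i x) = (\<Sum>i\<in>S. I01 (f i))"
  by (intro integral_sum) (auto intro: SP_integrable)

lemma I01_deriv: assumes "u \<in> SP" shows "I01 (deriv u) = 0"
proof -
  have "(deriv u has_integral (u 1 - u 0)) {0..1}"
    by (rule fundamental_theorem_of_calculus)
      (auto simp: has_real_derivative_iff_has_vector_derivative[symmetric] intro!: DERIV_subset[OF smooth_DERIV[OF SP_smooth[OF assms]]])
  moreover have "u 1 = u 0" using SP_per[OF assms, of 0] by simp
  ultimately show ?thesis by (simp add: integral_unique)
qed

lemma IBP: assumes "u \<in> SP" "v \<in> SP"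
  shows "I01 (\<lambda>x. u x * deriv v x) = - I01 (\<lambda>x. deriv u x * v x)"
proof -
  have "0 = I01 (deriv (\<lambda>x. u x * v x))" using I01_deriv[OF SP_mult[OF assms]] by simp
  also have "deriv (\<lambda>x. u x * v x) = (\<lambda>x. u x * deriv v x + deriv u x * v x)"
    using assms by (simp add: deriv_mult_s SP_smooth)
  also have "I01 \<dots> = I01 (\<lambda>x. u x * deriv v x) + I01 (\<lambda>x. deriv u x * v x)"
    using assms by (intro I01_add SP_mult SP_deriv)
  finally show ?thesis by linarith
qed

lemma IBP_n: assumes "u \<in> SP" "v \<in> SP"
  shows "I01 (\<lambda>x. u x * Dn n v x) = (-1) ^ n * I01 (\<lambda>x. Dn n u x * v x)"
  using assms(1)
proof (induction n arbitrary: u)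
  case 0 then show ?case by simp
next
  case (Suc n)
  have "I01 (\<lambda>x. u x * Dn (Suc n) v x) = I01 (\<lambda>x. u x * deriv (Dn n v) x)" by simp
  also have "\<dots> = - I01 (\<lambda>x. deriv u x * Dn n v x)"
    using Suc.prems assms by (intro IBP SP_Dn)
  also have "I01 (\<lambda>x. deriv u x * Dn n v x) = (-1) ^ n * I01 (\<lambda>x. Dn n (deriv u) x * v x)"
    using Suc.prems by (intro Suc.IH SP_deriv)
  also have "Dn n (deriv u) = Dn (Suc n) u" by (simp only: Dn_Suc')
  finally show ?case by simp
qed

lemma fundamental_SP: assumes "h \<in> SP" "\<And>\<psi>. \<psi> \<in> SP \<Longrightarrow> I01 (\<lambda>x. \<psi> x * h x) = 0"
  shows "h = (\<lambda>x. 0)"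
proof -
  have "I01 (\<lambda>x. h x * h x) = 0" using assms by blast
  then have z: "\<forall>x\<in>{0..1}. h x * h x = 0"
    using integral_eq_0_iff[of 0 1 "\<lambda>x. h x * h x"] SP_contin[OF SP_mult[OF assms(1) assms(1)]] by simp
  show ?thesis
  proof
    fix x
    have "h x = h ((x - of_int \<lfloor>x\<rfloor>) + of_int \<lfloor>x\<rfloor>)" by simp
    also have "\<dots> = h (x - of_int \<lfloor>x\<rfloor>)"
      using per_int[of h "x - of_int \<lfloor>x\<rfloor>" "\<lfloor>x\<rfloor>"] assms(1) by (simp add: SP_iff)
    also have "\<dots> = 0"
    proof -
      have "0 \<le> x - of_int \<lfloor>x\<rfloor>" "x - of_int \<lfloor>x\<rfloor> \<le> 1" using floor_correct[of x] by linarith+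
      then show ?thesis using z by auto
    qed
    finally show "h x = 0" .
  qed
qed

lemma per_shift_integral: assumes "u \<in> SP" shows "integral {c..c+1} u = I01 u"
proof -
  define n where "n = \<lfloor>c\<rfloor>"
  define t where "t = c - of_int n"
  have t: "0 \<le> t" "t < 1" unfolding t_def n_def by linarith+
  have per: "\<And>x m. u (x + of_int m) = u x" using per_int assms by (simp add: SP_iff)
  have "integral {c..c+1} u = integral {c..of_int n + 1} u + integral {of_int n + 1..c+1} u"
    using t Henstock_Kurzweil_Integration.integral_combine[where a=c and c="of_int n + 1" and b="c+1" and f=u] SP_integrable[OF assms] unfolding t_def by simp
  also have "integral {c..of_int n + 1} u = integral {t..1} u"
  proof -
    have "integral {t..1} (u \<circ> (\<lambda>x. x + of_int n)) = integral {t + of_int n..1 + of_int n} u"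
      by (rule integral_shift) (rule SP_contin[OF assms])
    moreover have "u \<circ> (\<lambda>x. x + of_int n) = u" using per by (auto simp: o_def)
    ultimately show ?thesis by (simp add: t_def add.commute)
  qed
  also have "integral {of_int n + 1..c+1} u = integral {0..t} u"
  proof -
    have "integral {0..t} (u \<circ> (\<lambda>x. x + of_int (n + 1))) = integral {0 + of_int (n+1)..t + of_int (n+1)} u"
      by (rule integral_shift) (rule SP_contin[OF assms])
    moreover have "u \<circ> (\<lambda>x. x + of_int (n + 1)) = u" using per by (auto simp: o_def simp del: of_int_add)
    ultimately show ?thesis by (simp add: t_def add.commute)
  qed
  also have "integral {t..1} u + integral {0..t} u = I01 u"
    using t Henstock_Kurzweil_Integration.integral_combine[where a=0 and c=t and b=1 and f=u] SP_integrable[OF assms] by simp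
  finally show ?thesis .
qed

lemma change_var: assumes "g \<in> Diffp" "u \<in> SP"
  shows "I01 (\<lambda>x. deriv g x * u (g x)) = I01 u"
proof -
  have "((\<lambda>x. deriv g x *\<^sub>R u (g x)) has_integral (integral {g 0..g 1} u)) {0..1}"
  proof (rule has_integral_substitution[where c="g 0" and d="g 1"])
    show "g 0 \<le> g 1" using Diffp_mono[OF assms(1), of 0 1] by simp
    show "g ` {0..1} \<subseteq> {g 0..g 1}"
      using Diffp_mono[OF assms(1)] by (auto simp: le_less)
    show "continuous_on {g 0..g 1} u" by (rule SP_contin[OF assms(2)])
    show "\<And>x. x \<in> {0..1} \<Longrightarrow> (g has_real_derivative deriv g x) (at x within {0..1})"
      using DERIV_subset smooth_DERIV[OF Diffp_smooth[OF assms(1)]] by blast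
  qed simp
  moreover have "g 1 = g 0 + 1" using Diffp_shift[OF assms(1), of 0] by simp
  ultimately show ?thesis using per_shift_integral[OF assms(2), of "g 0"]
    by (simp add: integral_unique)
qed

definition psf :: "nat \<Rightarrow> (nat \<Rightarrow> real \<Rightarrow> real) \<Rightarrow> real \<Rightarrow> real" where
  "psf k a = (\<lambda>x. \<Sum>i\<le>k. (-1) ^ i * Dn i (a i) x)"
definition bf :: "nat \<Rightarrow> (nat \<Rightarrow> real \<Rightarrow> real) \<Rightarrow> real \<Rightarrow> real" where
  "bf k a = (\<lambda>x. \<Sum>i\<in>{1..k}. (-1) ^ (i - 1) * Dn (i - 1) (a i) x)"
definition CF :: "nat \<Rightarrow> (nat \<Rightarrow> real \<Rightarrow> real) \<Rightarrow> op" where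
  "CF k a = (\<lambda>\<phi> x. \<Sum>i\<le>k. (-1) ^ i * Dn i (\<lambda>y. a i y * \<phi> y) x)"
definition M :: "(real \<Rightarrow> real) \<Rightarrow> op" where
  "M h = mkop (\<lambda>\<phi> x. h x * \<phi> x)"
definition DD :: "(real \<Rightarrow> real) \<Rightarrow> op" where
  "DD h = mkop (\<lambda>\<phi> x. h x * deriv \<phi> x)"
definition e0 :: "(real \<Rightarrow> real) \<Rightarrow> nat \<Rightarrow> real \<Rightarrow> real" where
  "e0 h = (\<lambda>i. if i = 0 then h else (\<lambda>x. 0))"
definition e1 :: "(real \<Rightarrow> real) \<Rightarrow> nat \<Rightarrow> real \<Rightarrow> real" where
  "e1 h = (\<lambda>i. if i = 1 then h else (\<lambda>x. 0))"

lemma P0_eq: "P0 k A = M (coeffs k A 0)"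
  by (simp add: P0_def M_def)
lemma P0s_eq: "P0s k A = M (psf k (coeffs k A))"
  by (simp add: P0s_def M_def psf_def)
lemma P1_eq: "P1 k A = DD (bf k (coeffs k A))"
  by (simp add: P1_def DD_def bf_def)
lemma Lmap_eq: "Lmap k A = DD (\<lambda>x. I01 (coeffs k A 0))"
  by (simp add: Lmap_def DD_def)
lemma Cmap_eq: "Cmap k A = mkop (CF k (coeffs k A))"
  by (simp add: Cmap_def CF_def)

lemma e0_SP: "h \<in> SP \<Longrightarrow> e0 h i \<in> SP"
  by (simp add: e0_def SP_const)
lemma e1_SP: "h \<in> SP \<Longrightarrow> e1 h i \<in> SP"
  by (simp add: e1_def SP_const)

lemma opc_e0: "opc k (e0 h) \<phi> = (\<lambda>x. h x * \<phi> x)"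
proof
  fix x
  have "(\<Sum>i\<le>k. e0 h i x * Dn i \<phi> x) = (\<Sum>i\<le>k. if i = 0 then h x * Dn i \<phi> x else 0)"
    by (rule sum.cong) (auto simp: e0_def)
  also have "\<dots> = h x * \<phi> x" by (simp add: sum.delta)
  finally show "opc k (e0 h) \<phi> x = h x * \<phi> x" by (simp add: opc_def)
qed

lemma opc_e1: "k \<ge> 1 \<Longrightarrow> opc k (e1 h) \<phi> = (\<lambda>x. h x * deriv \<phi> x)"
proof
  fix x assume k: "k \<ge> 1"
  have "(\<Sum>i\<le>k. e1 h i x * Dn i \<phi> x) = (\<Sum>i\<le>k. if i = 1 then h x * Dn i \<phi> x else 0)"
    by (rule sum.cong) (auto simp: e1_def)
  also have "\<dots> = h x * deriv \<phi> x" using k by (simp add: sum.delta)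
  finally show "opc k (e1 h) \<phi> x = h x * deriv \<phi> x" by (simp add: opc_def)
qed

lemma M_opc: "M h = mkop (opc k (e0 h))"
proof -
  have "opc k (e0 h) = (\<lambda>\<phi> x. h x * \<phi> x)" by (rule ext) (rule opc_e0)
  then show ?thesis by (simp add: M_def)
qed
lemma DD_opc: "k \<ge> 1 \<Longrightarrow> DD h = mkop (opc k (e1 h))"
proof -
  assume "k \<ge> 1"
  then have "opc k (e1 h) = (\<lambda>\<phi> x. h x * deriv \<phi> x)" by (intro ext) (simp add: opc_e1)
  then show ?thesis by (simp add: DD_def)
qed

lemma tr_e0: "tr k (e0 h) = e0 h"
  by (auto simp: tr_def e0_def)
lemma tr_e1: "k \<ge> 1 \<Longrightarrow> tr k (e1 h) = e1 h"
  by (auto simp: tr_def e1_def)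

lemma coeffs_M: "h \<in> SP \<Longrightarrow> coeffs k (M h) = e0 h"
  by (simp add: M_opc[of h k] coeffs_mkop e0_SP tr_e0)
lemma coeffs_DD: "h \<in> SP \<Longrightarrow> k \<ge> 1 \<Longrightarrow> coeffs k (DD h) = e1 h"
  by (simp add: DD_opc[of k h] coeffs_mkop e1_SP tr_e1)
lemma M_Dk: "h \<in> SP \<Longrightarrow> M h \<in> Dk k"
  by (simp add: M_opc[of h k] mkop_opc_Dk e0_SP)
lemma DD_Dk: "h \<in> SP \<Longrightarrow> k \<ge> 1 \<Longrightarrow> DD h \<in> Dk k"
  by (simp add: DD_opc[of k h] mkop_opc_Dk e1_SP)

lemma M_zero: "M (\<lambda>x. 0) = zero_op"
  by (auto simp: M_def mkop_def zero_op_def)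
lemma DD_zero: "DD (\<lambda>x. 0) = zero_op"
  by (auto simp: DD_def mkop_def zero_op_def)

lemma psf_e0: "psf k (e0 h) = h"
proof
  fix x
  have "(\<Sum>i\<le>k. (-1) ^ i * Dn i (e0 h i) x) = (\<Sum>i\<le>k. if i = 0 then h x else 0)"
    by (rule sum.cong) (auto simp: e0_def Dn_zero)
  then show "psf k (e0 h) x = h x" by (simp add: psf_def sum.delta)
qed

lemma psf_e1: "k \<ge> 1 \<Longrightarrow> psf k (e1 h) = (\<lambda>x. - deriv h x)"
proof
  fix x assume k: "k \<ge> 1"
  have "(\<Sum>i\<le>k. (-1) ^ i * Dn i (e1 h i) x) = (\<Sum>i\<le>k. if i = 1 then - deriv h x else 0)"
    by (rule sum.cong) (auto simp: e1_def Dn_zero)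
  then show "psf k (e1 h) x = - deriv h x" using k by (simp add: psf_def sum.delta)
qed

lemma bf_e0: "bf k (e0 h) = (\<lambda>x. 0)"
  unfolding bf_def e0_def by (auto simp: Dn_zero)

lemma bf_e1: "k \<ge> 1 \<Longrightarrow> bf k (e1 h) = h"
proof
  fix x assume k: "k \<ge> 1"
  have "(\<Sum>i\<in>{1..k}. (-1) ^ (i - 1) * Dn (i - 1) (e1 h i) x) = (\<Sum>i\<in>{1..k}. if i = 1 then h x else 0)"
    by (rule sum.cong) (auto simp: e1_def Dn_zero)
  then show "bf k (e1 h) x = h x" using k by (simp add: bf_def sum.delta)
qed

lemma CF_e0: "CF k (e0 h) \<phi> = (\<lambda>x. h x * \<phi> x)"
proof
  fix x
  have "(\<Sum>i\<le>k. (-1) ^ i * Dn i (\<lambda>y. e0 h i y * \<phi> y) x) = (\<Sum>i\<le>k. if i = 0 then h x * \<phi> x else 0)"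
    by (rule sum.cong) (auto simp: e0_def Dn_zero)
  then show "CF k (e0 h) \<phi> x = h x * \<phi> x" by (simp add: CF_def sum.delta)
qed

lemma CF_e1: "k \<ge> 1 \<Longrightarrow> CF k (e1 h) \<phi> = (\<lambda>x. - deriv (\<lambda>y. h y * \<phi> y) x)"
proof
  fix x assume k: "k \<ge> 1"
  have "(\<Sum>i\<le>k. (-1) ^ i * Dn i (\<lambda>y. e1 h i y * \<phi> y) x) = (\<Sum>i\<le>k. if i = 1 then - deriv (\<lambda>y. h y * \<phi> y) x else 0)"
    by (rule sum.cong) (auto simp: e1_def Dn_zero)
  then show "CF k (e1 h) \<phi> x = - deriv (\<lambda>y. h y * \<phi> y) x" using k by (simp add: CF_def sum.delta)
qed

lemma psf_SP: "(\<And>i. a i \<in> SP) \<Longrightarrow> psf k a \<in> SP"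
  unfolding psf_def by (rule SP_sum) (simp_all add: SP_cmult SP_Dn)
lemma bf_SP: "(\<And>i. a i \<in> SP) \<Longrightarrow> bf k a \<in> SP"
  unfolding bf_def by (rule SP_sum) (simp_all add: SP_cmult SP_Dn)

lemma CF_isdiff: assumes "\<And>i. a i \<in> SP" shows "isdiff k (CF k a)"
  unfolding CF_def
proof (rule isdiff_sum)
  fix i assume i: "i \<in> {..k}"
  have "isdiff 0 (\<lambda>\<phi> y. a i y * \<phi> y)" by (rule isdiff_mult[OF assms isdiff_id])
  then have "isdiff (0 + i) (\<lambda>\<phi>. Dn i (\<lambda>y. a i y * \<phi> y))" by (rule isdiff_Dn)
  then have "isdiff k (\<lambda>\<phi>. Dn i (\<lambda>y. a i y * \<phi> y))" using i isdiff_mono by fastforce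
  then show "isdiff k (\<lambda>\<phi> x. (-1) ^ i * Dn i (\<lambda>y. a i y * \<phi> y) x)" by (rule isdiff_cmult)
qed simp

lemma Cmap_Dk: "A \<in> Dk k \<Longrightarrow> Cmap k A \<in> Dk k"
  unfolding Cmap_eq by (rule isdiff_Dk[OF CF_isdiff[OF Dk_SP]])

lemma P0_Dk: "A \<in> Dk k \<Longrightarrow> P0 k A \<in> Dk k"
  unfolding P0_eq by (rule M_Dk[OF Dk_SP])
lemma P0s_Dk: "A \<in> Dk k \<Longrightarrow> P0s k A \<in> Dk k"
  unfolding P0s_eq by (rule M_Dk[OF psf_SP[OF Dk_SP]])
lemma P1_Dk: "A \<in> Dk k \<Longrightarrow> k \<ge> 1 \<Longrightarrow> P1 k A \<in> Dk k"
  unfolding P1_eq by (rule DD_Dk[OF bf_SP[OF Dk_SP]])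
lemma Lmap_Dk: "A \<in> Dk k \<Longrightarrow> k \<ge> 1 \<Longrightarrow> Lmap k A \<in> Dk k"
  unfolding Lmap_eq by (rule DD_Dk[OF SP_const])

lemma one_SP: "(\<lambda>x. 1) \<in> SP"
  by (rule SP_const)

lemma opc_one: "opc k a (\<lambda>x. 1) = a 0"
proof
  fix x
  have "(\<Sum>i\<le>k. a i x * Dn i (\<lambda>x. 1) x) = (\<Sum>i\<le>k. if i = 0 then a 0 x else 0)"
    by (rule sum.cong) (auto simp: Dn_const)
  then show "opc k a (\<lambda>x. 1) x = a 0 x" by (simp add: opc_def sum.delta)
qed

lemma coeffs0_one: "A \<in> Dk k \<Longrightarrow> coeffs k A 0 = A (\<lambda>x. 1)"
  using Dk_app[OF _ one_SP] opc_one by metis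

lemma CF_one: "CF k a (\<lambda>x. 1) = psf k a"
  by (simp add: CF_def psf_def)

lemma Cmap_one: "Cmap k A (\<lambda>x. 1) = psf k (coeffs k A)"
  by (simp add: Cmap_eq mkop_SP one_SP CF_one)

lemma coeffs0_Cmap: "A \<in> Dk k \<Longrightarrow> coeffs k (Cmap k A) 0 = psf k (coeffs k A)"
  using coeffs0_one[OF Cmap_Dk] Cmap_one by metis

lemma P0_Cmap: "A \<in> Dk k \<Longrightarrow> P0 k (Cmap k A) = P0s k A"
  by (simp add: P0_eq P0s_eq coeffs0_Cmap)

lemma deriv_bf: assumes "k \<ge> 1" "\<And>i. a i \<in> SP"
  shows "deriv (bf k a) = (\<lambda>x. a 0 x - psf k a x)"
proof -
  have "deriv (bf k a) = (\<lambda>x. \<Sum>i\<in>{1..k}. deriv (\<lambda>x. (-1) ^ (i - 1) * Dn (i - 1) (a i) x) x)"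
    unfolding bf_def using assms by (intro deriv_sum_s) (simp_all add: SP_smooth SP_cmult SP_Dn)
  also have "\<dots> = (\<lambda>x. \<Sum>i\<in>{1..k}. (-1) ^ (i - 1) * Dn i (a i) x)"
  proof (intro ext sum.cong refl)
    fix x i assume i: "i \<in> {1..k}"
    have "deriv (\<lambda>x. (-1) ^ (i - 1) * Dn (i - 1) (a i) x) = (\<lambda>x. (-1) ^ (i - 1) * deriv (Dn (i - 1) (a i)) x)"
      using assms by (simp add: deriv_cmult_s SP_smooth SP_Dn)
    moreover have "deriv (Dn (i - 1) (a i)) = Dn i (a i)" using i by (cases i) auto
    ultimately show "deriv (\<lambda>x. (-1) ^ (i - 1) * Dn (i - 1) (a i) x) x = (-1) ^ (i - 1) * Dn i (a i) x" by simp
  qed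
  also have "\<dots> = (\<lambda>x. a 0 x - psf k a x)"
  proof
    fix x
    have split: "{..k} = insert 0 {1..k}" by auto
    have "psf k a x = a 0 x + (\<Sum>i\<in>{1..k}. (-1) ^ i * Dn i (a i) x)"
      unfolding psf_def split by simp
    moreover have "(\<Sum>i\<in>{1..k}. (-1) ^ i * Dn i (a i) x) = - (\<Sum>i\<in>{1..k}. (-1) ^ (i - 1) * Dn i (a i) x)"
    proof -
      have "(\<Sum>i\<in>{1..k}. (-1) ^ i * Dn i (a i) x) = (\<Sum>i\<in>{1..k}. - ((-1) ^ (i - 1) * Dn i (a i) x))"
      proof (rule sum.cong)
        fix i assume "i \<in> {1..k}"
        then obtain j where "i = Suc j" by (cases i) auto
        then show "(-1) ^ i * Dn i (a i) x = - ((-1) ^ (i - 1) * Dn i (a i) x)" by simp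
      qed simp
      then show ?thesis by (simp add: sum_negf)
    qed
    ultimately show "(\<Sum>i\<in>{1..k}. (-1) ^ (i - 1) * Dn i (a i) x) = a 0 x - psf k a x" by simp
  qed
  finally show ?thesis .
qed

lemma I01_psf: assumes "\<And>i. a i \<in> SP" shows "I01 (psf k a) = I01 (a 0)"
proof -
  have "I01 (psf k a) = (\<Sum>i\<le>k. I01 (\<lambda>x. (-1) ^ i * Dn i (a i) x))"
    unfolding psf_def using assms by (intro I01_sum) (simp_all add: SP_cmult SP_Dn)
  also have "\<dots> = (\<Sum>i\<le>k. if i = 0 then I01 (a 0) else 0)"
  proof (rule sum.cong)
    fix i assume "i \<in> {..k}"
    show "I01 (\<lambda>x. (-1) ^ i * Dn i (a i) x) = (if i = 0 then I01 (a 0) else 0)"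
    proof (cases i)
      case 0 then show ?thesis by simp
    next
      case (Suc j)
      have "I01 (Dn i (a i)) = I01 (deriv (Dn j (a i)))" using Suc by simp
      also have "\<dots> = 0" using assms by (simp add: I01_deriv SP_Dn)
      finally show ?thesis using Suc by simp
    qed
  qed simp
  also have "\<dots> = I01 (a 0)" by (simp add: sum.delta)
  finally show ?thesis .
qed

lemma pairing:
  assumes a: "\<And>i. a i \<in> SP" and p: "\<phi> \<in> SP" and q: "\<psi> \<in> SP"
  shows "I01 (\<lambda>x. \<psi> x * opc k a \<phi> x) = I01 (\<lambda>x. \<phi> x * CF k a \<psi> x)"
proof -
  have t1: "(\<lambda>x. (a i x * \<psi> x) * Dn i \<phi> x) \<in> SP" for i
    using SP_mult[OF SP_mult[OF a q] SP_Dn[OF p]] .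
  have t2: "(\<lambda>x. (-1) ^ i * (\<phi> x * Dn i (\<lambda>y. a i y * \<psi> y) x)) \<in> SP" for i
    using SP_cmult[OF SP_mult[OF p SP_Dn[OF SP_mult[OF a q]]]] .
  have "I01 (\<lambda>x. \<psi> x * opc k a \<phi> x) = I01 (\<lambda>x. \<Sum>i\<le>k. (a i x * \<psi> x) * Dn i \<phi> x)"
    unfolding opc_def by (simp add: sum_distrib_left ac_simps)
  also have "\<dots> = (\<Sum>i\<le>k. I01 (\<lambda>x. (a i x * \<psi> x) * Dn i \<phi> x))"
    by (rule I01_sum) (simp_all add: t1)
  also have "\<dots> = (\<Sum>i\<le>k. (-1) ^ i * I01 (\<lambda>x. Dn i (\<lambda>y. a i y * \<psi> y) x * \<phi> x))"
    by (rule sum.cong[OF refl], rule IBP_n[OF SP_mult[OF a q] p])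
  also have "\<dots> = (\<Sum>i\<le>k. I01 (\<lambda>x. (-1) ^ i * (\<phi> x * Dn i (\<lambda>y. a i y * \<psi> y) x)))"
  proof (rule sum.cong[OF refl])
    fix i
    have "(\<lambda>x. Dn i (\<lambda>y. a i y * \<psi> y) x * \<phi> x) = (\<lambda>x. \<phi> x * Dn i (\<lambda>y. a i y * \<psi> y) x)"
      by (simp add: mult.commute)
    then show "(-1) ^ i * I01 (\<lambda>x. Dn i (\<lambda>y. a i y * \<psi> y) x * \<phi> x) = I01 (\<lambda>x. (-1) ^ i * (\<phi> x * Dn i (\<lambda>y. a i y * \<psi> y) x))"
      by (simp only: integral_mult_right)
  qed
  also have "\<dots> = I01 (\<lambda>x. \<Sum>i\<le>k. (-1) ^ i * (\<phi> x * Dn i (\<lambda>y. a i y * \<psi> y) x))"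
    by (rule I01_sum[symmetric]) (simp_all add: t2)
  also have "\<dots> = I01 (\<lambda>x. \<phi> x * CF k a \<psi> x)"
    unfolding CF_def by (simp add: sum_distrib_left ac_simps)
  finally show ?thesis .
qed

lemma Dk_pairing: assumes "A \<in> Dk k" "\<phi> \<in> SP" "\<psi> \<in> SP"
  shows "I01 (\<lambda>x. \<psi> x * A \<phi> x) = I01 (\<lambda>x. \<phi> x * Cmap k A \<psi> x)"
proof -
  have "A \<phi> = opc k (coeffs k A) \<phi>" using Dk_app assms by blast
  moreover have "Cmap k A \<psi> = CF k (coeffs k A) \<psi>" by (simp add: Cmap_eq mkop_SP assms)
  ultimately show ?thesis using pairing[OF Dk_SP[OF assms(1)] assms(2,3)] by simp
qed

lemma Dk_val_SP: "A \<in> Dk k \<Longrightarrow> \<phi> \<in> SP \<Longrightarrow> A \<phi> \<in> SP"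
  using isdiff_SP Dk_isdiff by blast

lemma op_ext: assumes "A \<in> Dk k" "B \<in> Dk k"
  and "\<And>\<phi> \<psi>. \<phi> \<in> SP \<Longrightarrow> \<psi> \<in> SP \<Longrightarrow> I01 (\<lambda>x. \<phi> x * A \<psi> x) = I01 (\<lambda>x. \<phi> x * B \<psi> x)"
  shows "A = B"
proof
  fix \<psi>
  show "A \<psi> = B \<psi>"
  proof (cases "\<psi> \<in> SP")
    case True
    let ?h = "\<lambda>x. A \<psi> x - B \<psi> x"
    have h: "?h \<in> SP" using SP_minus[OF Dk_val_SP[OF assms(1) True] Dk_val_SP[OF assms(2) True]] .
    have "I01 (\<lambda>x. \<phi> x * ?h x) = 0" if p: "\<phi> \<in> SP" for \<phi>
    proof -
      have "I01 (\<lambda>x. \<phi> x * ?h x) = I01 (\<lambda>x. \<phi> x * A \<psi> x - \<phi> x * B \<psi> x)"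
        by (simp add: right_diff_distrib)
      also have "\<dots> = I01 (\<lambda>x. \<phi> x * A \<psi> x) - I01 (\<lambda>x. \<phi> x * B \<psi> x)"
        by (rule I01_minus[OF SP_mult[OF p Dk_val_SP[OF assms(1) True]] SP_mult[OF p Dk_val_SP[OF assms(2) True]]])
      finally show ?thesis using assms(3)[OF p True] by simp
    qed
    then have "?h = (\<lambda>x. 0)" by (rule fundamental_SP[OF h])
    then show ?thesis by (metis (no_types) eq_iff_diff_eq_0 ext)
  next
    case False then show ?thesis using Dk_out assms by metis
  qed
qed

lemma Cmap_Cmap: assumes "A \<in> Dk k" shows "Cmap k (Cmap k A) = A"
proof (rule op_ext[OF Cmap_Dk[OF Cmap_Dk[OF assms]] assms])
  fix \<phi> \<psi> :: "real \<Rightarrow> real" assume p: "\<phi> \<in> SP" and q: "\<psi> \<in> SP"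
  have "I01 (\<lambda>x. \<phi> x * Cmap k (Cmap k A) \<psi> x) = I01 (\<lambda>x. \<psi> x * Cmap k A \<phi> x)"
    using Dk_pairing[OF Cmap_Dk[OF assms] p q] by simp
  also have "\<dots> = I01 (\<lambda>x. \<phi> x * A \<psi> x)"
    using Dk_pairing[OF assms q p] by simp
  finally show "I01 (\<lambda>x. \<phi> x * Cmap k (Cmap k A) \<psi> x) = I01 (\<lambda>x. \<phi> x * A \<psi> x)" .
qed

lemma P0s_Cmap: "A \<in> Dk k \<Longrightarrow> P0s k (Cmap k A) = P0 k A"
  using P0_Cmap[OF Cmap_Dk, of A k] Cmap_Cmap by simp

definition dco :: "nat \<Rightarrow> (nat \<Rightarrow> real \<Rightarrow> real) \<Rightarrow> nat \<Rightarrow> real \<Rightarrow> real" where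
  "dco n a j = (\<lambda>x. (if j \<le> n then deriv (a j) x else 0) + (if j = 0 then 0 else a (j - 1) x))"

lemma dco_SP: assumes "\<And>i. a i \<in> SP" shows "dco n a j \<in> SP"
proof -
  have 1: "(\<lambda>x. if j \<le> n then deriv (a j) x else 0) \<in> SP"
    by (cases "j \<le> n") (simp_all add: SP_deriv[OF assms] SP_const)
  have 2: "(\<lambda>x. if j = 0 then 0 else a (j - 1) x) \<in> SP"
    by (cases "j = 0") (simp_all add: assms SP_const)
  show ?thesis unfolding dco_def by (rule SP_add[OF 1 2])
qed

lemma deriv_opc: assumes a: "\<And>i. a i \<in> SP" and p: "\<phi> \<in> SP"
  shows "deriv (opc n a \<phi>) = opc (Suc n) (dco n a) \<phi>"
proof
  fix x
  have "deriv (opc n a \<phi>) = (\<lambda>x. \<Sum>i\<le>n. deriv (\<lambda>x. a i x * Dn i \<phi> x) x)"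
    unfolding opc_def by (rule deriv_sum_s) (simp_all add: SP_smooth[OF SP_mult[OF a SP_Dn[OF p]]])
  also have "\<dots> = (\<lambda>x. \<Sum>i\<le>n. deriv (a i) x * Dn i \<phi> x + a i x * Dn (Suc i) \<phi> x)"
    using a p by (simp add: deriv_mult_s SP_smooth SP_Dn add.commute)
  finally have e: "deriv (opc n a \<phi>) x = (\<Sum>i\<le>n. deriv (a i) x * Dn i \<phi> x) + (\<Sum>i\<le>n. a i x * Dn (Suc i) \<phi> x)"
    by (simp add: sum.distrib)
  have "opc (Suc n) (dco n a) \<phi> x = (\<Sum>j\<le>Suc n. (if j \<le> n then deriv (a j) x * Dn j \<phi> x else 0))
      + (\<Sum>j\<le>Suc n. (if j = 0 then 0 else a (j - 1) x * Dn j \<phi> x))"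
  proof -
    have "opc (Suc n) (dco n a) \<phi> x = (\<Sum>j\<le>Suc n. (if j \<le> n then deriv (a j) x * Dn j \<phi> x else 0)
      + (if j = 0 then 0 else a (j - 1) x * Dn j \<phi> x))"
      unfolding opc_def dco_def by (rule sum.cong) (auto simp: distrib_right)
    then show ?thesis by (simp only: sum.distrib)
  qed
  also have "(\<Sum>j\<le>Suc n. (if j \<le> n then deriv (a j) x * Dn j \<phi> x else 0)) = (\<Sum>i\<le>n. deriv (a i) x * Dn i \<phi> x)"
    by (simp add: sum.atMost_Suc)
  also have "(\<Sum>j\<le>Suc n. (if j = 0 then 0 else a (j - 1) x * Dn j \<phi> x)) = (\<Sum>i\<le>n. a i x * Dn (Suc i) \<phi> x)"
    by (subst sum.atMost_Suc_shift) simp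
  finally show "deriv (opc n a \<phi>) x = opc (Suc n) (dco n a) \<phi> x" using e by simp
qed

lemma G_unique: assumes H: "isdiff n H" and d: "\<And>\<phi>. \<phi> \<in> SP \<Longrightarrow> deriv (H \<phi>) = (\<lambda>x. 0)"
  and p: "\<phi> \<in> SP"
  shows "H \<phi> = (\<lambda>x. 0)"
proof -
  obtain h where h: "\<And>i. h i \<in> SP" "\<And>\<phi>. \<phi> \<in> SP \<Longrightarrow> H \<phi> = opc n h \<phi>"
    using H unfolding isdiff_def by blast
  have z: "dco n h j = (\<lambda>x. 0)" if "j \<le> Suc n" for j
  proof -
    have "opc (Suc n) (dco n h) \<psi> = opc (Suc n) (\<lambda>i x. 0) \<psi>" if "\<psi> \<in> SP" for \<psi>
      using d[OF that] deriv_opc[OF h(1) that, of n] h(2)[OF that] by (simp add: opc_def)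
    then show ?thesis using opc_unique[of "Suc n" "dco n h" "\<lambda>i x. 0" j] \<open>j \<le> Suc n\<close> by blast
  qed
  have hz: "h (n - m) = (\<lambda>x. 0)" if "m \<le> n" for m
    using that
  proof (induction m)
    case 0
    have "dco n h (Suc n) = h n" by (simp add: dco_def)
    then show ?case using z[of "Suc n"] by simp
  next
    case (Suc m)
    then have hm: "h (n - m) = (\<lambda>x. 0)" by simp
    have "dco n h (n - m) = (\<lambda>x. deriv (h (n - m)) x + h (n - Suc m) x)"
      using Suc.prems by (auto simp: dco_def)
    moreover have "deriv (h (n - m)) = (\<lambda>x. 0)" using hm deriv_const_fun by simp
    ultimately show ?case using z[of "n - m"] by (simp add: fun_eq_iff)
  qed
  have "h i = (\<lambda>x. 0)" if "i \<le> n" for i using hz[of "n - i"] that by simp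
  then show ?thesis using h(2)[OF p] by (simp add: opc_def)
qed

definition Gop :: "nat \<Rightarrow> (nat \<Rightarrow> real \<Rightarrow> real) \<Rightarrow> op" where
  "Gop k a \<phi> = (\<lambda>x. \<Sum>i\<in>{1..k}. \<Sum>m<i. ((-1) ^ m * Dn m (a i) x) * Dn (i - 1 - m) \<phi> x)"

lemma Gop_isdiff: assumes a: "\<And>i. a i \<in> SP" shows "isdiff k (Gop k a)"
proof -
  have "isdiff k (\<lambda>\<phi> x. \<Sum>i\<in>{1..k}. \<Sum>m<i. ((-1) ^ m * Dn m (a i) x) * Dn (i - 1 - m) \<phi> x)"
  proof (rule isdiff_sum)
    fix i assume i: "i \<in> {1..k}"
    show "isdiff k (\<lambda>\<phi> x. \<Sum>m<i. ((-1) ^ m * Dn m (a i) x) * Dn (i - 1 - m) \<phi> x)"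
    proof (rule isdiff_sum)
      fix m assume "m \<in> {..<i}"
      show "isdiff k (\<lambda>\<phi> x. ((-1) ^ m * Dn m (a i) x) * Dn (i - 1 - m) \<phi> x)"
        by (rule isdiff_monom[OF SP_cmult[OF SP_Dn[OF a]]]) (use i in auto)
    qed simp
  qed simp
  then show ?thesis unfolding Gop_def[abs_def] .
qed

lemma Gop_one: "Gop k a (\<lambda>x. 1) = bf k a"
proof
  fix x
  have "(\<Sum>m<i. ((-1) ^ m * Dn m (a i) x) * Dn (i - 1 - m) (\<lambda>x. 1) x) = (-1) ^ (i - 1) * Dn (i - 1) (a i) x"
    if "i \<in> {1..k}" for i
  proof -
    have "(\<Sum>m<i. ((-1) ^ m * Dn m (a i) x) * Dn (i - 1 - m) (\<lambda>x. 1) x)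
        = (\<Sum>m<i. if m = i - 1 then (-1) ^ m * Dn m (a i) x else 0)"
    proof (rule sum.cong[OF refl])
      fix m assume m: "m \<in> {..<i}"
      show "((-1) ^ m * Dn m (a i) x) * Dn (i - 1 - m) (\<lambda>x. 1) x = (if m = i - 1 then (-1) ^ m * Dn m (a i) x else 0)"
      proof (cases "m = i - 1")
        case True then show ?thesis by simp
      next
        case False
        then have "i - 1 - m \<ge> 1" using m by auto
        then show ?thesis using False by (simp add: Dn_const)
      qed
    qed
    also have "\<dots> = (-1) ^ (i - 1) * Dn (i - 1) (a i) x" using that by (simp add: sum.delta)
    finally show ?thesis .
  qed
  then show "Gop k a (\<lambda>x. 1) x = bf k a x" unfolding Gop_def bf_def by (intro sum.cong) auto
qed

lemma Gop_SP: "(\<And>i. a i \<in> SP) \<Longrightarrow> \<phi> \<in> SP \<Longrightarrow> Gop k a \<phi> \<in> SP"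
  using isdiff_SP Gop_isdiff by blast

lemma Gop_deriv: assumes a: "\<And>i. a i \<in> SP" and p: "\<phi> \<in> SP"
  shows "deriv (Gop k a \<phi>) = (\<lambda>x. opc k a \<phi> x - psf k a x * \<phi> x)"
proof -
  define T where "T i m x = ((-1) ^ m * Dn m (a i) x) * Dn (i - 1 - m) \<phi> x" for i m x
  have Tsp: "(\<lambda>x. T i m x) \<in> SP" for i m
    unfolding T_def using SP_mult[OF SP_cmult[OF SP_Dn[OF a]] SP_Dn[OF p]] .
  have inner: "deriv (\<lambda>x. \<Sum>m<i. T i m x) x = a i x * Dn i \<phi> x - (-1) ^ i * Dn i (a i) x * \<phi> x"
    if i: "i \<ge> 1" for i x
  proof -
    define t where "t m = (-1) ^ m * Dn m (a i) x * Dn (i - m) \<phi> x" for m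
    have "deriv (\<lambda>x. \<Sum>m<i. T i m x) = (\<lambda>x. \<Sum>m<i. deriv (\<lambda>x. T i m x) x)"
      by (rule deriv_sum_s) (simp_all add: SP_smooth[OF Tsp])
    moreover have "deriv (\<lambda>x. T i m x) x = t m - t (Suc m)" if m: "m < i" for m
    proof -
      have e1: "deriv (Dn (i - 1 - m) \<phi>) = Dn (i - m) \<phi>"
      proof -
        have "i - m = Suc (i - 1 - m)" using m by simp
        then show ?thesis by (simp only: Dn_Suc)
      qed
      have "deriv (\<lambda>x. T i m x) x = ((-1) ^ m * Dn m (a i) x) * Dn (i - m) \<phi> x
           + ((-1) ^ m * Dn (Suc m) (a i) x) * Dn (i - 1 - m) \<phi> x"
      proof -
        have "deriv (\<lambda>x. ((-1) ^ m * Dn m (a i) x) * Dn (i - 1 - m) \<phi> x)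
          = (\<lambda>x. ((-1) ^ m * Dn m (a i) x) * deriv (Dn (i - 1 - m) \<phi>) x + deriv (\<lambda>x. (-1) ^ m * Dn m (a i) x) x * Dn (i - 1 - m) \<phi> x)"
          by (rule deriv_mult_s[OF SP_smooth[OF SP_cmult[OF SP_Dn[OF a]]] SP_smooth[OF SP_Dn[OF p]]])
        moreover have "deriv (\<lambda>x. (-1) ^ m * Dn m (a i) x) = (\<lambda>x. (-1) ^ m * Dn (Suc m) (a i) x)"
          using deriv_cmult_s[OF SP_smooth[OF SP_Dn[OF a]]] by simp
        ultimately show ?thesis unfolding T_def e1 by simp
      qed
      moreover have "t (Suc m) = - (((-1) ^ m * Dn (Suc m) (a i) x) * Dn (i - 1 - m) \<phi> x)"
      proof -
        have "i - Suc m = i - 1 - m" by simp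
        then show ?thesis unfolding t_def by (simp only: power_Suc mult_minus_left mult_1_left)
      qed
      moreover have "t m = ((-1) ^ m * Dn m (a i) x) * Dn (i - m) \<phi> x" unfolding t_def by (simp only:)
      ultimately show ?thesis by (simp only: diff_minus_eq_add)
    qed
    ultimately have "deriv (\<lambda>x. \<Sum>m<i. T i m x) x = (\<Sum>m<i. t m - t (Suc m))" by simp
    also have "\<dots> = t 0 - t i" by (rule sum_lessThan_telescope')
    moreover have "t 0 = a i x * Dn i \<phi> x" unfolding t_def by simp
    moreover have "t i = (-1) ^ i * Dn i (a i) x * \<phi> x" unfolding t_def by simp
    ultimately show ?thesis by (simp only:)
  qed
  have "deriv (Gop k a \<phi>) = (\<lambda>x. \<Sum>i\<in>{1..k}. deriv (\<lambda>x. \<Sum>m<i. T i m x) x)"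
    unfolding Gop_def T_def[symmetric]
  proof (rule deriv_sum_s)
    fix i
    have "(\<lambda>x. \<Sum>m<i. T i m x) \<in> SP" by (rule SP_sum) (simp_all add: Tsp)
    then show "smooth (\<lambda>x. \<Sum>m<i. T i m x)" by (rule SP_smooth)
  qed simp
  also have "\<dots> = (\<lambda>x. \<Sum>i\<in>{1..k}. a i x * Dn i \<phi> x - (-1) ^ i * Dn i (a i) x * \<phi> x)"
    using inner by (intro ext sum.cong) auto
  also have "\<dots> = (\<lambda>x. opc k a \<phi> x - psf k a x * \<phi> x)"
  proof
    fix x
    have split: "{..k} = insert 0 {1..k}" by auto
    have "opc k a \<phi> x - psf k a x * \<phi> x
        = (a 0 x * \<phi> x + (\<Sum>i\<in>{1..k}. a i x * Dn i \<phi> x)) - (a 0 x + (\<Sum>i\<in>{1..k}. (-1) ^ i * Dn i (a i) x)) * \<phi> x"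
      unfolding opc_def psf_def split by simp
    also have "\<dots> = (\<Sum>i\<in>{1..k}. a i x * Dn i \<phi> x) - (\<Sum>i\<in>{1..k}. (-1) ^ i * Dn i (a i) x * \<phi> x)"
      by (simp add: algebra_simps sum_distrib_right sum_distrib_left)
    finally show "(\<Sum>i\<in>{1..k}. a i x * Dn i \<phi> x - (-1) ^ i * Dn i (a i) x * \<phi> x) = opc k a \<phi> x - psf k a x * \<phi> x"
      by (simp add: sum_subtractf)
  qed
  finally show ?thesis .
qed

lemma P1_char: assumes a: "\<And>i. a i \<in> SP" and H: "isdiff k H"
  and d: "\<And>\<phi>. \<phi> \<in> SP \<Longrightarrow> deriv (H \<phi>) = (\<lambda>x. opc k a \<phi> x - psf k a x * \<phi> x)"
  shows "H (\<lambda>x. 1) = bf k a"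
proof -
  let ?D = "\<lambda>\<phi> x. H \<phi> x - Gop k a \<phi> x"
  have Di: "isdiff k ?D" by (rule isdiff_minus[OF H Gop_isdiff[OF a]])
  have "deriv (?D \<phi>) = (\<lambda>x. 0)" if p: "\<phi> \<in> SP" for \<phi>
  proof -
    have "deriv (?D \<phi>) = (\<lambda>x. deriv (H \<phi>) x - deriv (Gop k a \<phi>) x)"
      by (rule deriv_minus_s[OF SP_smooth[OF isdiff_SP[OF H p]] SP_smooth[OF Gop_SP[OF a p]]])
    then show ?thesis using d[OF p] Gop_deriv[OF a p] by simp
  qed
  then have "?D (\<lambda>x. 1) = (\<lambda>x. 0)" using G_unique[OF Di] one_SP by blast
  then have "H (\<lambda>x. 1) = Gop k a (\<lambda>x. 1)" by (simp add: fun_eq_iff)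
  then show ?thesis by (simp add: Gop_one)
qed

lemma bf_Cmap: assumes A: "A \<in> Dk k" and k: "k \<ge> 1"
  shows "bf k (coeffs k (Cmap k A)) = (\<lambda>x. - bf k (coeffs k A) x)"
proof -
  define a where "a = coeffs k A"
  define c where "c = coeffs k (Cmap k A)"
  have a: "\<And>i. a i \<in> SP" unfolding a_def using Dk_SP[OF A] .
  have c: "\<And>i. c i \<in> SP" unfolding c_def using Dk_SP[OF Cmap_Dk[OF A]] .
  define H where "H \<psi> = (\<lambda>x. \<Sum>i\<in>{1..k}. (-1) ^ i * Dn (i - 1) (\<lambda>y. a i y * \<psi> y) x)" for \<psi>
  have Hi: "isdiff k H"
  proof -
    have "isdiff k (\<lambda>\<psi> x. \<Sum>i\<in>{1..k}. (-1) ^ i * Dn (i - 1) (\<lambda>y. a i y * \<psi> y) x)"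
    proof (rule isdiff_sum)
      fix i assume i: "i \<in> {1..k}"
      have "isdiff (0 + (i - 1)) (\<lambda>\<psi>. Dn (i - 1) (\<lambda>y. a i y * \<psi> y))"
        by (rule isdiff_Dn[OF isdiff_mult[OF a isdiff_id]])
      then have "isdiff k (\<lambda>\<psi>. Dn (i - 1) (\<lambda>y. a i y * \<psi> y))"
        using i isdiff_mono by fastforce
      then show "isdiff k (\<lambda>\<psi> x. (-1) ^ i * Dn (i - 1) (\<lambda>y. a i y * \<psi> y) x)" by (rule isdiff_cmult)
    qed simp
    then show ?thesis unfolding H_def[abs_def] .
  qed
  have psfc: "psf k c = a 0"
  proof -
    have "psf k c = Cmap k (Cmap k A) (\<lambda>x. 1)" unfolding c_def by (simp add: Cmap_one)
    also have "\<dots> = A (\<lambda>x. 1)" using Cmap_Cmap[OF A] by simp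
    also have "\<dots> = a 0" unfolding a_def using coeffs0_one[OF A] by simp
    finally show ?thesis .
  qed
  have dH: "deriv (H \<psi>) = (\<lambda>x. opc k c \<psi> x - psf k c x * \<psi> x)" if q: "\<psi> \<in> SP" for \<psi>
  proof -
    have "deriv (H \<psi>) = (\<lambda>x. \<Sum>i\<in>{1..k}. deriv (\<lambda>x. (-1) ^ i * Dn (i - 1) (\<lambda>y. a i y * \<psi> y) x) x)"
      unfolding H_def by (rule deriv_sum_s) (simp_all add: SP_smooth[OF SP_cmult[OF SP_Dn[OF SP_mult[OF a q]]]])
    also have "\<dots> = (\<lambda>x. \<Sum>i\<in>{1..k}. (-1) ^ i * Dn i (\<lambda>y. a i y * \<psi> y) x)"
    proof (intro ext sum.cong refl)
      fix x i assume i: "i \<in> {1..k}"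
      have "deriv (\<lambda>x. (-1) ^ i * Dn (i - 1) (\<lambda>y. a i y * \<psi> y) x) = (\<lambda>x. (-1) ^ i * deriv (Dn (i - 1) (\<lambda>y. a i y * \<psi> y)) x)"
        by (rule deriv_cmult_s[OF SP_smooth[OF SP_Dn[OF SP_mult[OF a q]]]])
      moreover have "deriv (Dn (i - 1) (\<lambda>y. a i y * \<psi> y)) = Dn i (\<lambda>y. a i y * \<psi> y)"
        using i by (cases i) auto
      ultimately show "deriv (\<lambda>x. (-1) ^ i * Dn (i - 1) (\<lambda>y. a i y * \<psi> y) x) x = (-1) ^ i * Dn i (\<lambda>y. a i y * \<psi> y) x"
        by simp
    qed
    also have "\<dots> = (\<lambda>x. CF k a \<psi> x - a 0 x * \<psi> x)"
    proof
      fix x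
      have split: "{..k} = insert 0 {1..k}" by auto
      show "(\<Sum>i\<in>{1..k}. (-1) ^ i * Dn i (\<lambda>y. a i y * \<psi> y) x) = CF k a \<psi> x - a 0 x * \<psi> x"
        unfolding CF_def split by simp
    qed
    also have "CF k a \<psi> = opc k c \<psi>"
    proof -
      have "Cmap k A \<psi> = CF k a \<psi>" unfolding a_def by (simp add: Cmap_eq mkop_SP q)
      moreover have "Cmap k A \<psi> = opc k c \<psi>" unfolding c_def by (rule Dk_app[OF Cmap_Dk[OF A] q])
      ultimately show ?thesis by simp
    qed
    finally show ?thesis using psfc by simp
  qed
  have "H (\<lambda>x. 1) = bf k c" by (rule P1_char[OF c Hi dH])
  moreover have "H (\<lambda>x. 1) = (\<lambda>x. - bf k a x)"
  proof
    fix x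
    have "H (\<lambda>x. 1) x = (\<Sum>i\<in>{1..k}. - ((-1) ^ (i - 1) * Dn (i - 1) (a i) x))"
      unfolding H_def
    proof (rule sum.cong[OF refl])
      fix i assume "i \<in> {1..k}"
      then obtain j where j: "i = Suc j" by (cases i) auto
      show "(-1) ^ i * Dn (i - 1) (\<lambda>y. a i y * 1) x = - ((-1) ^ (i - 1) * Dn (i - 1) (a i) x)"
        using j by simp
    qed
    then show "H (\<lambda>x. 1) x = - bf k a x" unfolding bf_def by (simp add: sum_negf)
  qed
  ultimately show ?thesis unfolding a_def c_def by simp
qed

lemma DD_neg: "DD (\<lambda>x. - h x) = opneg (DD h)"
  by (auto simp: DD_def mkop_def opneg_def fun_eq_iff)

lemma P1_Cmap: "A \<in> Dk k \<Longrightarrow> k \<ge> 1 \<Longrightarrow> P1 k (Cmap k A) = opneg (P1 k A)"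
  by (simp add: P1_eq bf_Cmap DD_neg)

section \<open>Invariance\<close>

lemma act_app: "f \<in> Diffp \<Longrightarrow> \<phi> \<in> SP \<Longrightarrow> act f A \<phi> = (\<lambda>x. deriv (inv f) x * A (\<lambda>y. \<phi> (f y)) (inv f x))"
  by (simp add: act_eq mkop_SP)

lemma act_M: assumes f: "f \<in> Diffp" shows "act f (M h) = M (\<lambda>x. deriv (inv f) x * h (inv f x))"
  unfolding M_def act_mkop[OF f] by (rule mkop_cong) (simp add: Diffp_f_inv[OF f] ac_simps)

lemma act_DD: assumes f: "f \<in> Diffp" shows "act f (DD h) = DD (\<lambda>x. h (inv f x))"
  unfolding DD_def act_mkop[OF f]
proof (rule mkop_cong)
  fix \<phi> :: "real \<Rightarrow> real" assume p: "\<phi> \<in> SP"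
  have "deriv (\<lambda>y. \<phi> (f y)) (inv f x) = deriv \<phi> x * deriv f (inv f x)" for x
  proof -
    have "((\<lambda>y. \<phi> (f y)) has_real_derivative deriv \<phi> (f (inv f x)) * deriv f (inv f x)) (at (inv f x))"
      using DERIV_chain2[OF smooth_DERIV[OF SP_smooth[OF p]] smooth_DERIV[OF Diffp_smooth[OF f]]] .
    then show ?thesis using Diffp_f_inv[OF f] DERIV_imp_deriv by metis
  qed
  then show "(\<lambda>x. deriv (inv f) x * (h (inv f x) * deriv (\<lambda>y. \<phi> (f y)) (inv f x))) = (\<lambda>x. h (inv f x) * deriv \<phi> x)"
    using Diffp_deriv_inv_mult[OF f] by (simp add: fun_eq_iff) (metis mult.commute mult.left_commute mult_1_right)
qed

lemma act_coeffs0: assumes A: "A \<in> Dk k" and f: "f \<in> Diffp"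
  shows "coeffs k (act f A) 0 = (\<lambda>x. deriv (inv f) x * coeffs k A 0 (inv f x))"
proof -
  have "coeffs k (act f A) 0 = act f A (\<lambda>x. 1)" by (rule coeffs0_one[OF act_Dk[OF A f]])
  also have "\<dots> = (\<lambda>x. deriv (inv f) x * A (\<lambda>y. 1) (inv f x))" by (simp add: act_app[OF f one_SP])
  also have "A (\<lambda>y. 1) = coeffs k A 0" using coeffs0_one[OF A] by simp
  finally show ?thesis .
qed

lemma P0_inv: assumes A: "A \<in> Dk k" and f: "f \<in> Diffp" shows "P0 k (act f A) = act f (P0 k A)"
  by (simp add: P0_eq act_coeffs0[OF A f] act_M[OF f])

lemma Cmap_inv: assumes A: "A \<in> Dk k" and f: "f \<in> Diffp" shows "Cmap k (act f A) = act f (Cmap k A)"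
proof (rule op_ext[OF Cmap_Dk[OF act_Dk[OF A f]] act_Dk[OF Cmap_Dk[OF A] f]])
  fix \<phi> \<psi> :: "real \<Rightarrow> real" assume p: "\<phi> \<in> SP" and q: "\<psi> \<in> SP"
  let ?g = "inv f"
  have g: "?g \<in> Diffp" by (rule Diffp_inv[OF f])
  have pf: "(\<lambda>y. \<phi> (f y)) \<in> SP" by (rule SP_comp_Diffp[OF p f])
  have qf: "(\<lambda>y. \<psi> (f y)) \<in> SP" by (rule SP_comp_Diffp[OF q f])
  have "I01 (\<lambda>x. \<phi> x * Cmap k (act f A) \<psi> x) = I01 (\<lambda>x. \<psi> x * act f A \<phi> x)"
    using Dk_pairing[OF act_Dk[OF A f] p q] by simp
  also have "\<dots> = I01 (\<lambda>x. deriv ?g x * (\<psi> (f (?g x)) * A (\<lambda>y. \<phi> (f y)) (?g x)))"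
    by (simp add: act_app[OF f p] Diffp_f_inv[OF f] ac_simps)
  also have "\<dots> = I01 (\<lambda>y. \<psi> (f y) * A (\<lambda>y. \<phi> (f y)) y)"
    by (rule change_var[OF g SP_mult[OF qf Dk_val_SP[OF A pf]]])
  also have "\<dots> = I01 (\<lambda>y. \<phi> (f y) * Cmap k A (\<lambda>y. \<psi> (f y)) y)"
    by (rule Dk_pairing[OF A pf qf])
  also have "\<dots> = I01 (\<lambda>x. deriv ?g x * (\<phi> (f (?g x)) * Cmap k A (\<lambda>y. \<psi> (f y)) (?g x)))"
    by (rule change_var[OF g SP_mult[OF pf Dk_val_SP[OF Cmap_Dk[OF A] qf]], symmetric])
  also have "\<dots> = I01 (\<lambda>x. \<phi> x * act f (Cmap k A) \<psi> x)"
    by (simp add: act_app[OF f q] Diffp_f_inv[OF f] ac_simps)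
  finally show "I01 (\<lambda>x. \<phi> x * Cmap k (act f A) \<psi> x) = I01 (\<lambda>x. \<phi> x * act f (Cmap k A) \<psi> x)" .
qed

lemma P0s_via: "A \<in> Dk k \<Longrightarrow> P0s k A = P0 k (Cmap k A)"
  by (simp add: P0_Cmap)

lemma P0s_inv: assumes A: "A \<in> Dk k" and f: "f \<in> Diffp" shows "P0s k (act f A) = act f (P0s k A)"
proof -
  have "P0s k (act f A) = P0 k (Cmap k (act f A))" by (rule P0s_via[OF act_Dk[OF A f]])
  also have "\<dots> = P0 k (act f (Cmap k A))" by (simp add: Cmap_inv[OF A f])
  also have "\<dots> = act f (P0 k (Cmap k A))" by (rule P0_inv[OF Cmap_Dk[OF A] f])
  also have "\<dots> = act f (P0s k A)" by (simp add: P0s_via[OF A])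
  finally show ?thesis .
qed

lemma Lmap_inv: assumes A: "A \<in> Dk k" and f: "f \<in> Diffp" shows "Lmap k (act f A) = act f (Lmap k A)"
proof -
  have "I01 (coeffs k (act f A) 0) = I01 (coeffs k A 0)"
    unfolding act_coeffs0[OF A f] by (rule change_var[OF Diffp_inv[OF f] Dk_SP[OF A]])
  then show ?thesis by (simp add: Lmap_eq act_DD[OF f])
qed

lemma psf_act: assumes A: "A \<in> Dk k" and f: "f \<in> Diffp"
  shows "psf k (coeffs k (act f A)) = (\<lambda>x. deriv (inv f) x * psf k (coeffs k A) (inv f x))"
proof -
  have "psf k (coeffs k (act f A)) = Cmap k (act f A) (\<lambda>x. 1)" by (simp add: Cmap_one)
  also have "\<dots> = act f (Cmap k A) (\<lambda>x. 1)" by (simp add: Cmap_inv[OF A f])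
  also have "\<dots> = (\<lambda>x. deriv (inv f) x * Cmap k A (\<lambda>y. 1) (inv f x))" by (simp add: act_app[OF f one_SP])
  also have "Cmap k A (\<lambda>y. 1) = psf k (coeffs k A)" by (simp add: Cmap_one)
  finally show ?thesis .
qed

lemma bf_act: assumes A: "A \<in> Dk k" and f: "f \<in> Diffp" and k: "k \<ge> 1"
  shows "bf k (coeffs k (act f A)) = (\<lambda>x. bf k (coeffs k A) (inv f x))"
proof -
  define a where "a = coeffs k A"
  define a' where "a' = coeffs k (act f A)"
  have a: "\<And>i. a i \<in> SP" unfolding a_def using Dk_SP[OF A] .
  have a': "\<And>i. a' i \<in> SP" unfolding a'_def using Dk_SP[OF act_Dk[OF A f]] .
  define H where "H \<phi> = (\<lambda>x. Gop k a (\<lambda>y. \<phi> (f y)) (inv f x))" for \<phi>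
  have Hi: "isdiff k H" unfolding H_def[abs_def] by (rule conj_isdiff[OF Gop_isdiff[OF a] f])
  have dH: "deriv (H \<phi>) = (\<lambda>x. opc k a' \<phi> x - psf k a' x * \<phi> x)" if p: "\<phi> \<in> SP" for \<phi>
  proof
    fix x
    have pf: "(\<lambda>y. \<phi> (f y)) \<in> SP" by (rule SP_comp_Diffp[OF p f])
    let ?G = "Gop k a (\<lambda>y. \<phi> (f y))"
    have "(H \<phi> has_real_derivative deriv ?G (inv f x) * deriv (inv f) x) (at x)"
      unfolding H_def
      using DERIV_chain2[OF smooth_DERIV[OF SP_smooth[OF Gop_SP[OF a pf]]] smooth_DERIV[OF Diffp_inv_smooth[OF f]]] .
    then have "deriv (H \<phi>) x = deriv ?G (inv f x) * deriv (inv f) x" by (rule DERIV_imp_deriv)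
    also have "deriv ?G = (\<lambda>x. opc k a (\<lambda>y. \<phi> (f y)) x - psf k a x * \<phi> (f x))"
      by (rule Gop_deriv[OF a pf])
    finally have e: "deriv (H \<phi>) x = (opc k a (\<lambda>y. \<phi> (f y)) (inv f x) - psf k a (inv f x) * \<phi> x) * deriv (inv f) x"
      by (simp add: Diffp_f_inv[OF f])
    have "opc k a' \<phi> x = act f A \<phi> x" unfolding a'_def using Dk_app[OF act_Dk[OF A f] p] by simp
    also have "\<dots> = deriv (inv f) x * opc k a (\<lambda>y. \<phi> (f y)) (inv f x)"
      unfolding a_def using act_app[OF f p] Dk_app[OF A pf] by simp
    finally have o: "opc k a' \<phi> x = deriv (inv f) x * opc k a (\<lambda>y. \<phi> (f y)) (inv f x)" .
    have ps: "psf k a' x = deriv (inv f) x * psf k a (inv f x)"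
      unfolding a'_def a_def using psf_act[OF A f] by simp
    show "deriv (H \<phi>) x = opc k a' \<phi> x - psf k a' x * \<phi> x"
      unfolding e o ps by (simp add: algebra_simps)
  qed
  have "H (\<lambda>x. 1) = bf k a'" by (rule P1_char[OF a' Hi dH])
  moreover have "H (\<lambda>x. 1) = (\<lambda>x. bf k a (inv f x))" unfolding H_def by (simp add: Gop_one)
  ultimately show ?thesis unfolding a_def a'_def by simp
qed

lemma P1_inv: assumes A: "A \<in> Dk k" and f: "f \<in> Diffp" and k: "k \<ge> 1"
  shows "P1 k (act f A) = act f (P1 k A)"
  by (simp add: P1_eq bf_act[OF A f k] act_DD[OF f])

section \<open>Linearity\<close>

lemma is_coeffs_opadd: assumes A: "A \<in> Dk k" and B: "B \<in> Dk k"
  shows "is_coeffs k (opadd A B) (\<lambda>i x. coeffs k A i x + coeffs k B i x)"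
  unfolding is_coeffs_iff
proof (intro conjI allI impI ballI)
  fix i show "(\<lambda>x. coeffs k A i x + coeffs k B i x) \<in> SP" by (rule SP_add[OF Dk_SP[OF A] Dk_SP[OF B]])
next
  fix i assume "k < i" then show "(\<lambda>x. coeffs k A i x + coeffs k B i x) = (\<lambda>x. 0)"
    using Dk_high[OF A] Dk_high[OF B] by simp
next
  fix \<phi> :: "real \<Rightarrow> real" assume p: "\<phi> \<in> SP"
  show "opadd A B \<phi> = opc k (\<lambda>i x. coeffs k A i x + coeffs k B i x) \<phi>"
    unfolding opadd_def Dk_app[OF A p] Dk_app[OF B p] opc_def
    by (simp add: distrib_right sum.distrib)
qed

lemma opadd_Dk: assumes A: "A \<in> Dk k" and B: "B \<in> Dk k" shows "opadd A B \<in> Dk k"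
  unfolding Dk_def using is_coeffs_opadd[OF A B] Dk_out[OF A] Dk_out[OF B] by (auto simp: opadd_def)

lemma coeffs_opadd: "A \<in> Dk k \<Longrightarrow> B \<in> Dk k \<Longrightarrow> coeffs k (opadd A B) = (\<lambda>i x. coeffs k A i x + coeffs k B i x)"
  using is_coeffs_opadd coeffs_eq by blast

lemma is_coeffs_opscale: assumes A: "A \<in> Dk k"
  shows "is_coeffs k (opscale c A) (\<lambda>i x. c * coeffs k A i x)"
  unfolding is_coeffs_iff
proof (intro conjI allI impI ballI)
  fix i show "(\<lambda>x. c * coeffs k A i x) \<in> SP" by (rule SP_cmult[OF Dk_SP[OF A]])
next
  fix i assume "k < i" then show "(\<lambda>x. c * coeffs k A i x) = (\<lambda>x. 0)"
    using Dk_high[OF A] by simp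
next
  fix \<phi> :: "real \<Rightarrow> real" assume p: "\<phi> \<in> SP"
  show "opscale c A \<phi> = opc k (\<lambda>i x. c * coeffs k A i x) \<phi>"
    unfolding opscale_def Dk_app[OF A p] opc_def
    by (simp add: sum_distrib_left ac_simps)
qed

lemma opscale_Dk: assumes A: "A \<in> Dk k" shows "opscale c A \<in> Dk k"
  unfolding Dk_def using is_coeffs_opscale[OF A] Dk_out[OF A] by (auto simp: opscale_def)

lemma coeffs_opscale: "A \<in> Dk k \<Longrightarrow> coeffs k (opscale c A) = (\<lambda>i x. c * coeffs k A i x)"
  using is_coeffs_opscale coeffs_eq by blast

lemma mkop_add: "opadd (mkop F) (mkop G) = mkop (\<lambda>\<phi> x. F \<phi> x + G \<phi> x)"
  by (auto simp: opadd_def mkop_def fun_eq_iff)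
lemma mkop_scale: "opscale c (mkop F) = mkop (\<lambda>\<phi> x. c * F \<phi> x)"
  by (auto simp: opscale_def mkop_def fun_eq_iff)

lemma M_add: "M (\<lambda>x. h1 x + h2 x) = opadd (M h1) (M h2)"
  unfolding M_def mkop_add by (simp add: distrib_right)
lemma DD_add: "DD (\<lambda>x. h1 x + h2 x) = opadd (DD h1) (DD h2)"
  unfolding DD_def mkop_add by (simp add: distrib_right)
lemma M_scale: "M (\<lambda>x. c * h x) = opscale c (M h)"
  unfolding M_def mkop_scale by (simp add: ac_simps)
lemma DD_scale: "DD (\<lambda>x. c * h x) = opscale c (DD h)"
  unfolding DD_def mkop_scale by (simp add: ac_simps)

lemma psf_add: assumes a: "\<And>i. a i \<in> SP" and b: "\<And>i. b i \<in> SP"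
  shows "psf k (\<lambda>i x. a i x + b i x) = (\<lambda>x. psf k a x + psf k b x)"
  unfolding psf_def
  by (simp add: Dn_add_s[OF SP_smooth[OF a] SP_smooth[OF b]] distrib_left sum.distrib)
lemma psf_scale: assumes a: "\<And>i. a i \<in> SP"
  shows "psf k (\<lambda>i x. c * a i x) = (\<lambda>x. c * psf k a x)"
  unfolding psf_def
  by (simp add: Dn_cmult_s[OF SP_smooth[OF a]] sum_distrib_left ac_simps)
lemma bf_add: assumes a: "\<And>i. a i \<in> SP" and b: "\<And>i. b i \<in> SP"
  shows "bf k (\<lambda>i x. a i x + b i x) = (\<lambda>x. bf k a x + bf k b x)"
  unfolding bf_def
  by (simp add: Dn_add_s[OF SP_smooth[OF a] SP_smooth[OF b]] distrib_left sum.distrib)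
lemma bf_scale: assumes a: "\<And>i. a i \<in> SP"
  shows "bf k (\<lambda>i x. c * a i x) = (\<lambda>x. c * bf k a x)"
  unfolding bf_def
  by (simp add: Dn_cmult_s[OF SP_smooth[OF a]] sum_distrib_left ac_simps)

lemma CF_add: assumes a: "\<And>i. a i \<in> SP" and b: "\<And>i. b i \<in> SP" and p: "\<phi> \<in> SP"
  shows "CF k (\<lambda>i x. a i x + b i x) \<phi> = (\<lambda>x. CF k a \<phi> x + CF k b \<phi> x)"
proof -
  have "Dn i (\<lambda>y. (a i y + b i y) * \<phi> y) = (\<lambda>x. Dn i (\<lambda>y. a i y * \<phi> y) x + Dn i (\<lambda>y. b i y * \<phi> y) x)" for i
  proof -
    have "(\<lambda>y. (a i y + b i y) * \<phi> y) = (\<lambda>y. a i y * \<phi> y + b i y * \<phi> y)" by (simp add: distrib_right)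
    then show ?thesis using Dn_add_s[OF SP_smooth[OF SP_mult[OF a p]] SP_smooth[OF SP_mult[OF b p]]] by simp
  qed
  then show ?thesis unfolding CF_def by (simp add: distrib_left sum.distrib)
qed

lemma CF_scale: assumes a: "\<And>i. a i \<in> SP" and p: "\<phi> \<in> SP"
  shows "CF k (\<lambda>i x. c * a i x) \<phi> = (\<lambda>x. c * CF k a \<phi> x)"
proof -
  have "Dn i (\<lambda>y. c * a i y * \<phi> y) = (\<lambda>x. c * Dn i (\<lambda>y. a i y * \<phi> y) x)" for i
  proof -
    have "(\<lambda>y. c * a i y * \<phi> y) = (\<lambda>y. c * (a i y * \<phi> y))" by (simp add: ac_simps)
    then show ?thesis using Dn_cmult_s[OF SP_smooth[OF SP_mult[OF a p]]] by simp
  qed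
  then show ?thesis unfolding CF_def by (simp add: sum_distrib_left ac_simps)
qed

lemma Cmap_add: assumes A: "A \<in> Dk k" and B: "B \<in> Dk k"
  shows "Cmap k (opadd A B) = opadd (Cmap k A) (Cmap k B)"
  unfolding Cmap_eq coeffs_opadd[OF A B] mkop_add
  by (rule mkop_cong) (simp add: CF_add[OF Dk_SP[OF A] Dk_SP[OF B]])

lemma Cmap_scale: assumes A: "A \<in> Dk k"
  shows "Cmap k (opscale c A) = opscale c (Cmap k A)"
  unfolding Cmap_eq coeffs_opscale[OF A] mkop_scale
  by (rule mkop_cong) (simp add: CF_scale[OF Dk_SP[OF A]])

lemma P0_add: "A \<in> Dk k \<Longrightarrow> B \<in> Dk k \<Longrightarrow> P0 k (opadd A B) = opadd (P0 k A) (P0 k B)"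
  by (simp add: P0_eq coeffs_opadd M_add)
lemma P0_scale: "A \<in> Dk k \<Longrightarrow> P0 k (opscale c A) = opscale c (P0 k A)"
  by (simp add: P0_eq coeffs_opscale M_scale)
lemma P0s_add: "A \<in> Dk k \<Longrightarrow> B \<in> Dk k \<Longrightarrow> P0s k (opadd A B) = opadd (P0s k A) (P0s k B)"
  by (simp add: P0s_eq coeffs_opadd psf_add Dk_SP M_add)
lemma P0s_scale: "A \<in> Dk k \<Longrightarrow> P0s k (opscale c A) = opscale c (P0s k A)"
  by (simp add: P0s_eq coeffs_opscale psf_scale Dk_SP M_scale)
lemma P1_add: "A \<in> Dk k \<Longrightarrow> B \<in> Dk k \<Longrightarrow> P1 k (opadd A B) = opadd (P1 k A) (P1 k B)"
  by (simp add: P1_eq coeffs_opadd bf_add Dk_SP DD_add)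
lemma P1_scale: "A \<in> Dk k \<Longrightarrow> P1 k (opscale c A) = opscale c (P1 k A)"
  by (simp add: P1_eq coeffs_opscale bf_scale Dk_SP DD_scale)
lemma Lmap_add: assumes A: "A \<in> Dk k" and B: "B \<in> Dk k" shows "Lmap k (opadd A B) = opadd (Lmap k A) (Lmap k B)"
proof -
  have "I01 (\<lambda>x. coeffs k A 0 x + coeffs k B 0 x) = I01 (coeffs k A 0) + I01 (coeffs k B 0)"
    by (rule I01_add[OF Dk_SP[OF A] Dk_SP[OF B]])
  then show ?thesis by (simp add: Lmap_eq coeffs_opadd[OF A B] DD_add[symmetric])
qed
lemma Lmap_scale: assumes A: "A \<in> Dk k" shows "Lmap k (opscale c A) = opscale c (Lmap k A)"
proof -
  have "I01 (\<lambda>x. c * coeffs k A 0 x) = c * I01 (coeffs k A 0)" by simp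
  then show ?thesis by (simp add: Lmap_eq coeffs_opscale[OF A] DD_scale[symmetric])
qed

lemma Cmap_Ik: "Cmap k \<in> Ik k"
  unfolding Ik_def using Cmap_Dk Cmap_add Cmap_scale Cmap_inv by blast
lemma P0_Ik: "P0 k \<in> Ik k"
  unfolding Ik_def using P0_Dk P0_add P0_scale P0_inv by blast
lemma P0s_Ik: "P0s k \<in> Ik k"
  unfolding Ik_def using P0s_Dk P0s_add P0s_scale P0s_inv by blast
lemma P1_Ik: "k \<ge> 1 \<Longrightarrow> P1 k \<in> Ik k"
  unfolding Ik_def using P1_Dk P1_add P1_scale P1_inv by blast
lemma Lmap_Ik: "k \<ge> 1 \<Longrightarrow> Lmap k \<in> Ik k"
  unfolding Ik_def using Lmap_Dk Lmap_add Lmap_scale Lmap_inv by blast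

lemma P0_M: "h \<in> SP \<Longrightarrow> P0 k (M h) = M h"
  by (simp add: P0_eq coeffs_M e0_def)
lemma P0s_M: "h \<in> SP \<Longrightarrow> P0s k (M h) = M h"
  by (simp add: P0s_eq coeffs_M psf_e0)
lemma P1_M: "h \<in> SP \<Longrightarrow> P1 k (M h) = zero_op"
  by (simp add: P1_eq coeffs_M bf_e0 DD_zero)
lemma Lmap_M: "h \<in> SP \<Longrightarrow> Lmap k (M h) = DD (\<lambda>x. I01 h)"
  by (simp add: Lmap_eq coeffs_M e0_def)
lemma Cmap_M: "h \<in> SP \<Longrightarrow> Cmap k (M h) = M h"
proof -
  assume h: "h \<in> SP"
  have e: "CF k (e0 h) = (\<lambda>\<phi> x. h x * \<phi> x)" by (rule ext) (rule CF_e0)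
  show ?thesis unfolding Cmap_eq coeffs_M[OF h] e by (simp add: M_def)
qed

lemma P0_DD: "h \<in> SP \<Longrightarrow> k \<ge> 1 \<Longrightarrow> P0 k (DD h) = zero_op"
  by (simp add: P0_eq coeffs_DD e1_def M_zero)
lemma P0s_DD: "h \<in> SP \<Longrightarrow> k \<ge> 1 \<Longrightarrow> P0s k (DD h) = M (\<lambda>x. - deriv h x)"
  by (simp add: P0s_eq coeffs_DD psf_e1)
lemma P1_DD: "h \<in> SP \<Longrightarrow> k \<ge> 1 \<Longrightarrow> P1 k (DD h) = DD h"
  by (simp add: P1_eq coeffs_DD bf_e1)
lemma Lmap_DD: "h \<in> SP \<Longrightarrow> k \<ge> 1 \<Longrightarrow> Lmap k (DD h) = zero_op"
  by (simp add: Lmap_eq coeffs_DD e1_def DD_zero)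
lemma Cmap_DD: "h \<in> SP \<Longrightarrow> k \<ge> 1 \<Longrightarrow> Cmap k (DD h) = mkop (\<lambda>\<phi> x. - deriv (\<lambda>y. h y * \<phi> y) x)"
proof -
  assume h: "h \<in> SP" and k: "k \<ge> 1"
  have e: "CF k (e1 h) = (\<lambda>\<phi> x. - deriv (\<lambda>y. h y * \<phi> y) x)" by (rule ext) (rule CF_e1[OF k])
  show ?thesis unfolding Cmap_eq coeffs_DD[OF h k] e ..
qed

lemma M_minus: "M (\<lambda>x. h1 x - h2 x) = opminus (M h1) (M h2)"
  by (auto simp: M_def mkop_def opminus_def fun_eq_iff left_diff_distrib)

theorem relations:
  fixes k :: nat
  assumes k: "k \<ge> 1" and A: "A \<in> Dk k"
  shows
      "P0 k (P0 k A) = P0 k A \<and>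
      P0 k (Cmap k A) = P0s k A \<and>
      P0 k (P0s k A) = P0s k A \<and>
      P0 k (P1 k A) = zero_op \<and>
      P0 k (Lmap k A) = zero_op \<and>
      Cmap k (P0 k A) = P0 k A \<and>
      Cmap k (Cmap k A) = A \<and>
      Cmap k (P0s k A) = P0s k A \<and>
      Cmap k (P1 k A) = opminus (opminus (P0s k A) (P1 k A)) (P0 k A) \<and>
      Cmap k (Lmap k A) = opneg (Lmap k A) \<and>
      P0s k (P0 k A) = P0 k A \<and>
      P0s k (Cmap k A) = P0 k A \<and>
      P0s k (P0s k A) = P0s k A \<and>
      P0s k (P1 k A) = opminus (P0s k A) (P0 k A) \<and>
      P0s k (Lmap k A) = zero_op \<and>
      P1 k (P0 k A) = zero_op \<and>
      P1 k (Cmap k A) = opneg (P1 k A) \<and>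
      P1 k (P0s k A) = zero_op \<and>
      P1 k (P1 k A) = P1 k A \<and>
      P1 k (Lmap k A) = Lmap k A \<and>
      Lmap k (P0 k A) = Lmap k A \<and>
      Lmap k (Cmap k A) = Lmap k A \<and>
      Lmap k (P0s k A) = Lmap k A \<and>
      Lmap k (P1 k A) = zero_op \<and>
      Lmap k (Lmap k A) = zero_op"
proof -
  define a where "a = coeffs k A"
  have a: "\<And>i. a i \<in> SP" unfolding a_def using Dk_SP[OF A] .
  have a0: "a 0 \<in> SP" using a .
  have ps: "psf k a \<in> SP" by (rule psf_SP[OF a])
  have b: "bf k a \<in> SP" by (rule bf_SP[OF a])
  have c: "(\<lambda>x. I01 (a 0)) \<in> SP" by (rule SP_const)
  have eP0: "P0 k A = M (a 0)" unfolding a_def by (rule P0_eq)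
  have eP0s: "P0s k A = M (psf k a)" unfolding a_def by (rule P0s_eq)
  have eP1: "P1 k A = DD (bf k a)" unfolding a_def by (rule P1_eq)
  have eL: "Lmap k A = DD (\<lambda>x. I01 (a 0))" unfolding a_def by (rule Lmap_eq)
  have Ips: "I01 (psf k a) = I01 (a 0)" by (rule I01_psf[OF a])
  have db: "deriv (bf k a) = (\<lambda>x. a 0 x - psf k a x)" by (rule deriv_bf[OF k a])
  have r9: "Cmap k (P1 k A) = opminus (opminus (P0s k A) (P1 k A)) (P0 k A)"
    unfolding eP1 eP0s eP0 Cmap_DD[OF b k]
  proof (rule ext)
    fix \<phi> :: "real \<Rightarrow> real"
    show "mkop (\<lambda>\<phi> x. - deriv (\<lambda>y. bf k a y * \<phi> y) x) \<phi> = opminus (opminus (M (psf k a)) (DD (bf k a))) (M (a 0)) \<phi>"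
    proof (cases "\<phi> \<in> SP")
      case True
      have "deriv (\<lambda>y. bf k a y * \<phi> y) = (\<lambda>x. bf k a x * deriv \<phi> x + deriv (bf k a) x * \<phi> x)"
        by (rule deriv_mult_s[OF SP_smooth[OF b] SP_smooth[OF True]])
      then show ?thesis using True
        by (simp add: mkop_SP M_def DD_def opminus_def db fun_eq_iff algebra_simps)
    next
      case False then show ?thesis by (simp add: mkop_nSP M_def DD_def opminus_def)
    qed
  qed
  have r10: "Cmap k (Lmap k A) = opneg (Lmap k A)"
    unfolding eL Cmap_DD[OF c k]
  proof (rule ext)
    fix \<phi> :: "real \<Rightarrow> real"
    show "mkop (\<lambda>\<phi> x. - deriv (\<lambda>y. I01 (a 0) * \<phi> y) x) \<phi> = opneg (DD (\<lambda>x. I01 (a 0))) \<phi>"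
    proof (cases "\<phi> \<in> SP")
      case True
      have "deriv (\<lambda>y. I01 (a 0) * \<phi> y) = (\<lambda>x. I01 (a 0) * deriv \<phi> x)"
        by (rule deriv_cmult_s[OF SP_smooth[OF True]])
      then show ?thesis using True by (simp add: mkop_SP DD_def opneg_def)
    next
      case False then show ?thesis by (simp add: mkop_nSP DD_def opneg_def)
    qed
  qed
  have r14: "P0s k (P1 k A) = opminus (P0s k A) (P0 k A)"
    unfolding eP1 eP0s eP0 P0s_DD[OF b k] db M_minus[symmetric] by simp
  have r15: "P0s k (Lmap k A) = zero_op"
    unfolding eL P0s_DD[OF c k] by (simp add: deriv_const_fun M_zero)
  have r22: "Lmap k (Cmap k A) = Lmap k A"
    unfolding eL Lmap_eq coeffs0_Cmap[OF A] a_def[symmetric] Ips ..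
  have r23: "Lmap k (P0s k A) = Lmap k A"
    unfolding eL eP0s Lmap_M[OF ps] Ips ..
  show ?thesis
    using r9 r10 r14 r15 r22 r23
      P0_M[OF a0] P0_M[OF ps] P0_DD[OF b k] P0_DD[OF c k]
      Cmap_M[OF a0] Cmap_M[OF ps] P0s_M[OF a0] P0s_M[OF ps]
      P1_M[OF a0] P1_M[OF ps] P1_DD[OF b k] P1_DD[OF c k]
      Lmap_M[OF a0] Lmap_DD[OF b k] Lmap_DD[OF c k]
      P0_Cmap[OF A] Cmap_Cmap[OF A] P0s_Cmap[OF A] P1_Cmap[OF A k]
    unfolding eP0 eP0s eP1 eL by simp
qed

theorem proposition5p1:
  fixes k :: nat
  assumes "k \<ge> 1"
  shows "Cmap k \<in> Ik k \<and> P0 k \<in> Ik k \<and> P0s k \<in> Ik k \<and> P1 k \<in> Ik k \<and> Lmap k \<in> Ik k \<and>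
    (\<forall>A\<in>Dk k.
      P0 k (P0 k A) = P0 k A \<and>
      P0 k (Cmap k A) = P0s k A \<and>
      P0 k (P0s k A) = P0s k A \<and>
      P0 k (P1 k A) = zero_op \<and>
      P0 k (Lmap k A) = zero_op \<and>
      Cmap k (P0 k A) = P0 k A \<and>
      Cmap k (Cmap k A) = A \<and>
      Cmap k (P0s k A) = P0s k A \<and>
      Cmap k (P1 k A) = opminus (opminus (P0s k A) (P1 k A)) (P0 k A) \<and>
      Cmap k (Lmap k A) = opneg (Lmap k A) \<and>
      P0s k (P0 k A) = P0 k A \<and>
      P0s k (Cmap k A) = P0 k A \<and>
      P0s k (P0s k A) = P0s k A \<and>
      P0s k (P1 k A) = opminus (P0s k A) (P0 k A) \<and>
      P0s k (Lmap k A) = zero_op \<and>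
      P1 k (P0 k A) = zero_op \<and>
      P1 k (Cmap k A) = opneg (P1 k A) \<and>
      P1 k (P0s k A) = zero_op \<and>
      P1 k (P1 k A) = P1 k A \<and>
      P1 k (Lmap k A) = Lmap k A \<and>
      Lmap k (P0 k A) = Lmap k A \<and>
      Lmap k (Cmap k A) = Lmap k A \<and>
      Lmap k (P0s k A) = Lmap k A \<and>
      Lmap k (P1 k A) = zero_op \<and>
      Lmap k (Lmap k A) = zero_op)"
  using Cmap_Ik P0_Ik P0s_Ik P1_Ik[OF assms] Lmap_Ik[OF assms] relations[OF assms] by blast

end
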